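(* Let $\Omega\subset\mathbb R^2$ be a convex polygonal domain with corners $\boldsymbol c_j$, $j=1,\dots,d$, and boundary $\Gamma$. Let $\sigma:=d_I+\rho$ with $\rho(x)=\operatorname{dist}(x,\Gamma)$ and $d_I=c_Ih^2\in(0,e^{-1})$ for a fixed constant $c_I>1$ and a parameter $h>0$. Let $r_j(x):=|x-\boldsymbol c_j|$, $\Omega_R^j:=\{x\in\Omega: r_j(x)<R\}$ with $R>0$ so small that these sets are pairwise disjoint, and $\hat\Omega_{R/2}:=\Omega\setminus\bigcup_{j}\Omega_{R/2}^j$. Then for $\beta_j\in[0,1)$, $j=1,\dots,d$, with constants $c$ independent of $h$, $$\|\sigma^{-1/2}r_j^{-\beta_j}\|_{L^2(\Omega_R^j)}\le c\,|\ln h|^{1/2}\times\begin{cases}h^{\min\{0,1-2\beta_j\}}&\text{if }\beta_j\ne\tfrac12,\\ |\ln h|^{1/2}&\text{if }\beta_j=\tfrac12,\end{cases}$$ and $$\|\sigma^{-1/2}\|_{L^2(\hat\Omega_{R/2})}\le c\,|\ln h|^{1/2}.$$ *)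

theory Defs
  imports "HOL-Analysis.Analysis"
begin

definition L2_norm_sq :: "(real^2) set \<Rightarrow> (real^2 \<Rightarrow> real) \<Rightarrow> ennreal" where
  "L2_norm_sq S f = (\<integral>\<^sup>+ x\<in>S. ennreal ((f x)\<^sup>2) \<partial>lborel)"

definition sigma_w :: "(real^2) set \<Rightarrow> real \<Rightarrow> real \<Rightarrow> real^2 \<Rightarrow> real" where
  "sigma_w \<Omega> cI h x = cI * h\<^sup>2 + infdist x (frontier \<Omega>)"

end

theory Submission
  imports Defs
begin
definition psi2 :: "real \<times> real \<Rightarrow> real^2" where
  "psi2 p = fst p *\<^sub>R axis 1 1 + snd p *\<^sub>R axis 2 1"

lemma psi2_nth [simp]: "psi2 p $ 1 = fst p" "psi2 p $ 2 = snd p"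
  by (simp_all add: psi2_def axis_def)

lemma psi2_cont: "continuous_on UNIV psi2"
  unfolding psi2_def by (intro continuous_intros)

lemma psi2_meas[measurable]: "psi2 \<in> borel_measurable borel"
  by (rule borel_measurable_continuous_onI[OF psi2_cont])

lemma psi2_meas2[measurable]: "psi2 \<in> borel_measurable (lborel \<Otimes>\<^sub>M lborel)"
  by (simp add: lborel_prod)

lemma Basis_real2: "(Basis :: (real^2) set) = {axis 1 1, axis 2 1}"
  apply (simp add: Basis_vec_def)
  by (auto simp: UNIV_2)

lemma prod_Basis_real2: "(\<Prod>b\<in>(Basis :: (real^2) set). f b) = f (axis 1 1) * f (axis 2 1)"
proof -
  have "axis 1 (1::real) \<noteq> (axis 2 1 :: real^2)"
    by (simp add: axis_eq_axis)
  then show ?thesis by (simp add: Basis_real2)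
qed

lemma lborel_vec2: "lborel = distr (lborel \<Otimes>\<^sub>M lborel) borel psi2"
proof (rule lborel_eqI)
  fix l u :: "real^2" assume le: "\<And>b. b \<in> Basis \<Longrightarrow> l \<bullet> b \<le> u \<bullet> b"
  have l1: "l $ 1 \<le> u $ 1" using le[of "axis 1 1"] by (simp add: Basis_real2 inner_axis)
  have l2: "l $ 2 \<le> u $ 2" using le[of "axis 2 1"] by (simp add: Basis_real2 inner_axis)
  have pre: "psi2 -` box l u = box (l$1) (u$1) \<times> box (l$2) (u$2)"
  proof -
    have "x \<in> box l u \<longleftrightarrow> (l$1 < x$1 \<and> x$1 < u$1) \<and> (l$2 < x$2 \<and> x$2 < u$2)" for x :: "real^2"
      by (auto simp: mem_box Basis_real2 inner_axis)
    then show ?thesis by (auto simp: box_def)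
  qed
  have "emeasure (distr (lborel \<Otimes>\<^sub>M lborel) borel psi2) (box l u)
      = emeasure (lborel \<Otimes>\<^sub>M lborel) (box (l$1) (u$1) \<times> box (l$2) (u$2))"
    by (simp add: emeasure_distr pre)
  also have "\<dots> = ennreal ((u$1 - l$1) * (u$2 - l$2))"
    using l1 l2 by (simp add: lborel.emeasure_pair_measure_Times ennreal_mult)
  also have "(u$1 - l$1) * (u$2 - l$2) = (\<Prod>b\<in>Basis. (u - l) \<bullet> b)"
    by (simp add: prod_Basis_real2 inner_axis)
  finally show "emeasure (distr (lborel \<Otimes>\<^sub>M lborel) borel psi2) (box l u) = (\<Prod>b\<in>Basis. (u - l) \<bullet> b)" .
qed simp

lemma nn_integral_vec2:
  fixes f :: "real^2 \<Rightarrow> ennreal"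
  assumes [measurable]: "f \<in> borel_measurable borel"
  shows "(\<integral>\<^sup>+x. f x \<partial>lborel) = (\<integral>\<^sup>+s. \<integral>\<^sup>+t. f (psi2 (s,t)) \<partial>lborel \<partial>lborel)"
proof -
  have "(\<integral>\<^sup>+x. f x \<partial>lborel) = (\<integral>\<^sup>+x. f x \<partial>(distr (lborel \<Otimes>\<^sub>M lborel) borel psi2))"
    by (subst lborel_vec2[symmetric]) simp
  also have "\<dots> = (\<integral>\<^sup>+p. f (psi2 p) \<partial>(lborel \<Otimes>\<^sub>M lborel))"
    by (simp add: nn_integral_distr)
  also have "\<dots> = (\<integral>\<^sup>+s. \<integral>\<^sup>+t. f (psi2 (s,t)) \<partial>lborel \<partial>lborel)"
    using lborel.nn_integral_fst[of "\<lambda>p. f (psi2 p)" lborel]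
      measurable_compose[OF psi2_meas2 assms] by simp
  finally show ?thesis .
qed


lemma orth_meas:
  fixes A :: "real^2 \<Rightarrow> real^2"
  assumes A: "orthogonal_transformation A"
  shows "A \<in> borel_measurable borel"
  using A orthogonal_transformation_linear linear_continuous_on
        borel_measurable_continuous_onI
  by (metis linear_conv_bounded_linear)

lemma lborel_orth_invariant:
  fixes A :: "real^2 \<Rightarrow> real^2"
  assumes A: "orthogonal_transformation A"
  shows "lborel = distr lborel borel A"
proof (rule lborel_eqI)
  fix l u :: "real^2" assume le: "\<And>b. b \<in> Basis \<Longrightarrow> l \<bullet> b \<le> u \<bullet> b"
  have Am: "A \<in> borel_measurable borel" by (rule orth_meas[OF A])
  have eq: "A -` box l u = inv A ` box l u"
    using orthogonal_transformation_bij[OF A] by (simp add: bij_vimage_eq_inv_image)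
  have bm: "A -` box l u \<in> sets lborel" using Am by (auto intro: measurable_sets_borel)
  have lm: "box l u \<in> lmeasurable" by simp
  have lm2: "A -` box l u \<in> lmeasurable"
    unfolding eq using measurable_orthogonal_image[OF orthogonal_transformation_inv[OF A] lm] .
  have "emeasure (distr lborel borel A) (box l u) = emeasure lborel (A -` box l u)"
    using Am by (simp add: emeasure_distr)
  also have "\<dots> = emeasure lebesgue (A -` box l u)"
    using bm by simp
  also have "\<dots> = ennreal (measure lebesgue (A -` box l u))"
    using lm2 by (simp add: emeasure_eq_measure2)
  also have "measure lebesgue (A -` box l u) = measure lebesgue (box l u)"
    unfolding eq using measure_orthogonal_image[OF orthogonal_transformation_inv[OF A] lm] .
  also have "\<dots> = measure lborel (box l u)" by simp
  also have "\<dots> = (\<Prod>b\<in>Basis. (u - l) \<bullet> b)" using le by (simp add: measure_lborel_box_eq)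
  finally show "emeasure (distr lborel borel A) (box l u) = (\<Prod>b\<in>Basis. (u - l) \<bullet> b)" .
qed simp

lemma inner_real2: "(z::real^2) \<bullet> w = z$1 * w$1 + z$2 * w$2"
  by (simp add: inner_vec_def UNIV_2)

lemma orth_frame:
  fixes u v :: "real^2"
  assumes "u \<bullet> u = 1" "v \<bullet> v = 1" "u \<bullet> v = 0"
  shows "orthogonal_transformation (\<lambda>z::real^2. (z$1) *\<^sub>R u + (z$2) *\<^sub>R v)"
proof -
  have lin: "linear (\<lambda>z::real^2. (z$1) *\<^sub>R u + (z$2) *\<^sub>R v)"
    by (intro linearI) (simp_all add: algebra_simps)
  have ip: "((z$1) *\<^sub>R u + (z$2) *\<^sub>R v) \<bullet> ((w$1) *\<^sub>R u + (w$2) *\<^sub>R v) = z \<bullet> w" for z w :: "real^2"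
  proof -
    have "((z$1) *\<^sub>R u + (z$2) *\<^sub>R v) \<bullet> ((w$1) *\<^sub>R u + (w$2) *\<^sub>R v)
       = z$1 * w$1 * (u \<bullet> u) + z$2 * w$2 * (v \<bullet> v) + (z$1 * w$2 + z$2 * w$1) * (u \<bullet> v)"
      by (simp add: inner_add_left inner_add_right inner_commute algebra_simps)
    also have "\<dots> = z \<bullet> w" using assms by (simp add: inner_real2)
    finally show ?thesis .
  qed
  show ?thesis unfolding orthogonal_transformation_def using lin ip by simp
qed

lemma nn_integral_frame:
  fixes f :: "real^2 \<Rightarrow> ennreal" and u v p :: "real^2"
  assumes f[measurable]: "f \<in> borel_measurable borel"
    and uv: "u \<bullet> u = 1" "v \<bullet> v = 1" "u \<bullet> v = 0"
  shows "(\<integral>\<^sup>+x. f x \<partial>lborel) = (\<integral>\<^sup>+s. \<integral>\<^sup>+t. f (p + s *\<^sub>R u + t *\<^sub>R v) \<partial>lborel \<partial>lborel)"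
proof -
  define A where "A = (\<lambda>z::real^2. (z$1) *\<^sub>R u + (z$2) *\<^sub>R v)"
  have A: "orthogonal_transformation A" unfolding A_def by (rule orth_frame[OF uv])
  have Am[measurable]: "A \<in> borel_measurable borel" by (rule orth_meas[OF A])
  have "(\<integral>\<^sup>+x. f x \<partial>lborel) = (\<integral>\<^sup>+x. f x \<partial>(distr lborel borel ((+) p)))"
    by (simp add: lborel_distr_plus)
  also have "\<dots> = (\<integral>\<^sup>+x. f (p + x) \<partial>lborel)"
    by (simp add: nn_integral_distr)
  also have "\<dots> = (\<integral>\<^sup>+x. f (p + x) \<partial>(distr lborel borel A))"
    by (simp flip: lborel_orth_invariant[OF A])
  also have "\<dots> = (\<integral>\<^sup>+z. f (p + A z) \<partial>lborel)"
    by (simp add: nn_integral_distr)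
  also have "\<dots> = (\<integral>\<^sup>+s. \<integral>\<^sup>+t. f (p + A (psi2 (s,t))) \<partial>lborel \<partial>lborel)"
    by (rule nn_integral_vec2) measurable
  also have "\<dots> = (\<integral>\<^sup>+s. \<integral>\<^sup>+t. f (p + s *\<^sub>R u + t *\<^sub>R v) \<partial>lborel \<partial>lborel)"
    by (simp add: A_def add.assoc)
  finally show ?thesis .
qed

lemma int_S:
  fixes \<alpha> R :: real
  assumes "0 \<le> \<alpha>" "\<alpha> < 1" "0 \<le> R"
  shows "(\<integral>\<^sup>+s. ennreal (if 0 \<le> s \<and> s \<le> R then s powr (-\<alpha>) else 0) \<partial>lborel)
         = ennreal (R powr (1-\<alpha>) / (1-\<alpha>))"
proof -
  have h: "((\<lambda>s. s powr (-\<alpha>)) has_integral (R powr (-\<alpha>+1) / (-\<alpha>+1))) {0..R}"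
    by (rule has_integral_powr_from_0) (use assms in auto)
  have "(\<integral>\<^sup>+s. ennreal (if 0 \<le> s \<and> s \<le> R then s powr (-\<alpha>) else 0) \<partial>lborel)
      = (\<integral>\<^sup>+s. ennreal (s powr (-\<alpha>)) * indicator {0..R} s \<partial>lborel)"
    by (intro nn_integral_cong) (auto simp: indicator_def)
  also have "\<dots> = ennreal (R powr (-\<alpha>+1) / (-\<alpha>+1))"
    by (rule nn_integral_has_integral_lebesgue'[OF _ h]) simp
  finally show ?thesis by (simp add: add.commute)
qed

lemma int_T0:
  fixes d R :: real
  assumes "0 < d" "0 \<le> R"
  shows "(\<integral>\<^sup>+t. ennreal (if 0 \<le> t \<and> t \<le> R then 1 / (d + t) else 0) \<partial>lborel)
         = ennreal (ln (d + R) - ln d)"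
proof -
  have h: "((\<lambda>t. 1 / (d + t)) has_integral (ln (d + R) - ln (d + 0))) {0..R}"
    using assms
    by (intro fundamental_theorem_of_calculus)
       (auto intro!: derivative_eq_intros simp flip: has_real_derivative_iff_has_vector_derivative
             simp: field_simps)
  have "(\<integral>\<^sup>+t. ennreal (if 0 \<le> t \<and> t \<le> R then 1 / (d + t) else 0) \<partial>lborel)
      = (\<integral>\<^sup>+t. ennreal (1 / (d + t)) * indicator {0..R} t \<partial>lborel)"
    by (intro nn_integral_cong) (auto simp: indicator_def)
  also have "\<dots> = ennreal (ln (d + R) - ln (d + 0))"
    by (rule nn_integral_has_integral_lebesgue'[OF _ h]) (use assms in auto)
  finally show ?thesis by simp
qed

lemma int_Tg:
  fixes d R \<gamma> :: real
  assumes d: "0 < d" and g: "0 < \<gamma>" "\<gamma> < 1"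
  shows "(\<integral>\<^sup>+t. ennreal (if 0 \<le> t \<and> t \<le> R then t powr (-\<gamma>) / (d + t) else 0) \<partial>lborel)
         \<le> ennreal (d powr (-\<gamma>) * (1/(1-\<gamma>) + 1/\<gamma>))"
proof -
  have h1: "((\<lambda>t. t powr (-\<gamma>) / d) has_integral (d powr (-\<gamma>+1) / (-\<gamma>+1)) / d) {0..d}"
    by (intro has_integral_divide has_integral_powr_from_0) (use assms in auto)
  have h2: "((\<lambda>t. t powr (-\<gamma>-1)) has_integral -(d powr (-\<gamma>-1+1)) / (-\<gamma>-1+1)) {d..}"
    by (rule has_integral_powr_to_inf) (use assms in auto)
  have "(\<integral>\<^sup>+t. ennreal (if 0 \<le> t \<and> t \<le> R then t powr (-\<gamma>) / (d + t) else 0) \<partial>lborel)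
      \<le> (\<integral>\<^sup>+t. ennreal (t powr (-\<gamma>) / d) * indicator {0..d} t
                + ennreal (t powr (-\<gamma>-1)) * indicator {d..} t \<partial>lborel)"
  proof (rule nn_integral_mono)
    fix t :: real
    show "ennreal (if 0 \<le> t \<and> t \<le> R then t powr (-\<gamma>) / (d + t) else 0)
        \<le> ennreal (t powr (-\<gamma>) / d) * indicator {0..d} t + ennreal (t powr (-\<gamma>-1)) * indicator {d..} t"
    proof (cases "0 \<le> t \<and> t \<le> R")
      case True
      show ?thesis
      proof (cases "t \<le> d")
        case le: True
        have "t powr (-\<gamma>) / (d + t) \<le> t powr (-\<gamma>) / d"
          using True d by (intro divide_left_mono) auto
        then have "ennreal (t powr (-\<gamma>) / (d + t)) \<le> ennreal (t powr (-\<gamma>) / d) * indicator {0..d} t"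
          using True le by (simp add: indicator_def ennreal_leI)
        also have "\<dots> \<le> ennreal (t powr (-\<gamma>) / d) * indicator {0..d} t + ennreal (t powr (-\<gamma>-1)) * indicator {d..} t"
          by (rule add_increasing2) auto
        finally show ?thesis using True by simp
      next
        case gt: False
        have "t powr (-\<gamma>) / (d + t) \<le> t powr (-\<gamma>) / t"
          using True d gt by (intro divide_left_mono) auto
        also have "\<dots> = t powr (-\<gamma>-1)" using gt d by (simp add: powr_diff)
        finally have "ennreal (t powr (-\<gamma>) / (d + t)) \<le> ennreal (t powr (-\<gamma>-1)) * indicator {d..} t"
          using True gt by (simp add: indicator_def ennreal_leI)
        also have "\<dots> \<le> ennreal (t powr (-\<gamma>) / d) * indicator {0..d} t + ennreal (t powr (-\<gamma>-1)) * indicator {d..} t"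
          by (rule add_increasing) auto
        finally show ?thesis using True by simp
      qed
    qed auto
  qed
  also have "\<dots> = (\<integral>\<^sup>+t. ennreal (t powr (-\<gamma>) / d) * indicator {0..d} t \<partial>lborel)
                + (\<integral>\<^sup>+t. ennreal (t powr (-\<gamma>-1)) * indicator {d..} t \<partial>lborel)"
    by (rule nn_integral_add) auto
  also have "(\<integral>\<^sup>+t. ennreal (t powr (-\<gamma>) / d) * indicator {0..d} t \<partial>lborel)
      = ennreal ((d powr (-\<gamma>+1) / (-\<gamma>+1)) / d)"
    by (rule nn_integral_has_integral_lebesgue'[OF _ h1]) (use assms in auto)
  also have "(\<integral>\<^sup>+t. ennreal (t powr (-\<gamma>-1)) * indicator {d..} t \<partial>lborel)
      = ennreal (-(d powr (-\<gamma>-1+1)) / (-\<gamma>-1+1))"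
    by (rule nn_integral_has_integral_lebesgue'[OF _ h2]) (use assms in auto)
  also have "ennreal ((d powr (-\<gamma>+1) / (-\<gamma>+1)) / d) + ennreal (-(d powr (-\<gamma>-1+1)) / (-\<gamma>-1+1))
      = ennreal (d powr (-\<gamma>) * (1/(1-\<gamma>) + 1/\<gamma>))"
  proof -
    have e1: "(d powr (-\<gamma>+1) / (-\<gamma>+1)) / d = d powr (-\<gamma>) / (1-\<gamma>)"
    proof -
      have a: "d powr (1-\<gamma>) = d powr (-\<gamma>) * d" using d powr_add[of d "-\<gamma>" 1] by simp
      have b: "1 - \<gamma> \<noteq> 0" "-\<gamma>+1 = 1 - \<gamma>" using g by auto
      show ?thesis using d b(1) by (simp add: b(2) a)
    qed
    have e2: "-(d powr (-\<gamma>-1+1)) / (-\<gamma>-1+1) = d powr (-\<gamma>) / \<gamma>"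
      by (simp add: field_simps)
    have p1: "0 \<le> d powr (-\<gamma>) / (1-\<gamma>)" "0 \<le> d powr (-\<gamma>) / \<gamma>" using g by auto
    show ?thesis unfolding e1 e2
      by (subst ennreal_plus[OF p1, symmetric]) (simp add: distrib_left)
  qed
  finally show ?thesis .
qed


definition Wt :: "real \<Rightarrow> real^2 \<Rightarrow> real^2 \<Rightarrow> real" where
  "Wt \<beta> p x = (if x = p then 1 else dist x p powr (-2*\<beta>))"

lemma Wt_meas[measurable]: "Wt \<beta> p \<in> borel_measurable borel"
  unfolding Wt_def by measurable

lemma pw_bound:
  fixes s t \<alpha> \<gamma> \<beta> :: real
  assumes "0 < s" "0 < t" "0 \<le> \<alpha>" "0 \<le> \<gamma>" "\<alpha> + \<gamma> = 2*\<beta>"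
  shows "sqrt (s^2 + t^2) powr (-2*\<beta>) \<le> s powr (-\<alpha>) * t powr (-\<gamma>)"
proof -
  have r: "s \<le> sqrt (s^2+t^2)" "t \<le> sqrt (s^2+t^2)"
    using assms by (auto intro: real_le_rsqrt)
  have "sqrt (s^2 + t^2) powr (-2*\<beta>) = sqrt (s^2 + t^2) powr (-\<alpha>) * sqrt (s^2 + t^2) powr (-\<gamma>)"
  proof -
    have "-2*\<beta> = -\<alpha> + -\<gamma>" using assms by simp
    then show ?thesis by (simp only: powr_add)
  qed
  also have "\<dots> \<le> s powr (-\<alpha>) * t powr (-\<gamma>)"
    using assms r by (intro mult_mono powr_mono2') auto
  finally show ?thesis .
qed

lemma quarter:
  fixes u v p :: "real^2"
  assumes uv: "u \<bullet> u = 1" "v \<bullet> v = 1" "u \<bullet> v = 0" and R: "0 \<le> R" and d: "0 < d"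
    and \<alpha>: "0 \<le> \<alpha>" "\<alpha> < 1" and \<gamma>: "0 \<le> \<gamma>" and sm: "\<alpha> + \<gamma> = 2*\<beta>"
  shows "(\<integral>\<^sup>+x. ennreal (if 0 \<le> u \<bullet> (x-p) \<and> u \<bullet> (x-p) \<le> R \<and> 0 \<le> v \<bullet> (x-p) \<and> v \<bullet> (x-p) \<le> R
             then Wt \<beta> p x / (d + v \<bullet> (x-p)) else 0) \<partial>lborel)
     \<le> ennreal (R powr (1-\<alpha>)/(1-\<alpha>)) *
       (\<integral>\<^sup>+t. ennreal (if 0 \<le> t \<and> t \<le> R then t powr (-\<gamma>)/(d+t) else 0) \<partial>lborel)"
    (is "(\<integral>\<^sup>+x. ?F x \<partial>lborel) \<le> _")
proof -
  define g1 where "g1 = (\<lambda>s::real. ennreal (if 0 \<le> s \<and> s \<le> R then s powr (-\<alpha>) else 0))"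
  define g2 where "g2 = (\<lambda>t::real. ennreal (if 0 \<le> t \<and> t \<le> R then t powr (-\<gamma>)/(d+t) else 0))"
  have [measurable]: "g1 \<in> borel_measurable borel" "g2 \<in> borel_measurable borel"
    unfolding g1_def g2_def by measurable
  have Fm[measurable]: "?F \<in> borel_measurable borel" by measurable
  have ev: "?F (p + s *\<^sub>R u + t *\<^sub>R v)
      = ennreal (if 0 \<le> s \<and> s \<le> R \<and> 0 \<le> t \<and> t \<le> R then
          (if s = 0 \<and> t = 0 then 1 else sqrt (s^2+t^2) powr (-2*\<beta>)) / (d + t) else 0)" for s t
  proof -
    have e0: "u \<bullet> (s *\<^sub>R u + t *\<^sub>R v) = s" "v \<bullet> (s *\<^sub>R u + t *\<^sub>R v) = t"
      using uv by (simp_all add: inner_add_right inner_commute)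
    have e1: "u \<bullet> (p + s *\<^sub>R u + t *\<^sub>R v - p) = s" "v \<bullet> (p + s *\<^sub>R u + t *\<^sub>R v - p) = t"
      using e0 by (simp_all add: add.assoc)
    have e2: "(p + s *\<^sub>R u + t *\<^sub>R v = p) \<longleftrightarrow> s = 0 \<and> t = 0"
    proof
      assume "p + s *\<^sub>R u + t *\<^sub>R v = p"
      then show "s = 0 \<and> t = 0" using e1 by auto
    qed auto
    have e3: "dist (p + s *\<^sub>R u + t *\<^sub>R v) p = sqrt (s^2+t^2)"
    proof -
      have "(s *\<^sub>R u + t *\<^sub>R v) \<bullet> (s *\<^sub>R u + t *\<^sub>R v) = s^2 + t^2"
        using uv by (simp add: inner_add_left inner_add_right inner_commute power2_eq_square)
      then show ?thesis by (simp add: dist_norm norm_eq_sqrt_inner add.assoc)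
    qed
    show ?thesis by (simp add: e0 e1 e2 e3 Wt_def)
  qed
  have "(\<integral>\<^sup>+x. ?F x \<partial>lborel) = (\<integral>\<^sup>+s. \<integral>\<^sup>+t. ?F (p + s *\<^sub>R u + t *\<^sub>R v) \<partial>lborel \<partial>lborel)"
    by (rule nn_integral_frame[OF Fm uv])
  also have "\<dots> \<le> (\<integral>\<^sup>+s. \<integral>\<^sup>+t. g1 s * g2 t \<partial>lborel \<partial>lborel)"
  proof (rule nn_integral_mono_AE)
    show "AE s in lborel. (\<integral>\<^sup>+t. ?F (p + s *\<^sub>R u + t *\<^sub>R v) \<partial>lborel) \<le> (\<integral>\<^sup>+t. g1 s * g2 t \<partial>lborel)"
      using AE_lborel_singleton[of 0]
    proof eventually_elim
      case (elim s)
      show ?case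
      proof (rule nn_integral_mono_AE)
        show "AE t in lborel. ?F (p + s *\<^sub>R u + t *\<^sub>R v) \<le> g1 s * g2 t"
          using AE_lborel_singleton[of 0]
        proof eventually_elim
          case (elim t)
          show ?case
          proof (cases "0 \<le> s \<and> s \<le> R \<and> 0 \<le> t \<and> t \<le> R")
            case True
            with elim \<open>s \<noteq> 0\<close> have st: "0 < s" "0 < t" by auto
            have "sqrt (s^2+t^2) powr (-2*\<beta>) / (d + t) \<le> s powr (-\<alpha>) * t powr (-\<gamma>) / (d+t)"
              using pw_bound[OF st \<alpha>(1) \<gamma> sm] st d by (intro divide_right_mono) auto
            have F1: "?F (p + s *\<^sub>R u + t *\<^sub>R v) = ennreal (sqrt (s^2+t^2) powr (-2*\<beta>) / (d + t))"
              using ev[of s t] True st by simp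
            have G: "g1 s * g2 t = ennreal (s powr (-\<alpha>) * t powr (-\<gamma>) / (d+t))"
              using True st d by (simp add: g1_def g2_def ennreal_mult[symmetric])
            show ?thesis unfolding F1 G by (rule ennreal_leI) fact
          next
            case False
            have F0: "?F (p + s *\<^sub>R u + t *\<^sub>R v) = 0"
              using ev[of s t] False by simp
            show ?thesis unfolding F0 by simp
          qed
        qed
      qed
    qed
  qed
  also have "\<dots> = (\<integral>\<^sup>+s. g1 s * (\<integral>\<^sup>+t. g2 t \<partial>lborel) \<partial>lborel)"
    by (simp add: nn_integral_cmult)
  also have "\<dots> = (\<integral>\<^sup>+s. g1 s \<partial>lborel) * (\<integral>\<^sup>+t. g2 t \<partial>lborel)"
    by (simp add: nn_integral_multc)
  also have "(\<integral>\<^sup>+s. g1 s \<partial>lborel) = ennreal (R powr (1-\<alpha>)/(1-\<alpha>))"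
    unfolding g1_def by (rule int_S[OF \<alpha> R])
  finally show ?thesis unfolding g2_def .
qed


definition Gt :: "real \<Rightarrow> real \<Rightarrow> real \<Rightarrow> ennreal" where
  "Gt \<gamma> d R = (\<integral>\<^sup>+t. ennreal (if 0 \<le> t \<and> t \<le> R then t powr (-\<gamma>)/(d+t) else 0) \<partial>lborel)"

lemma half:
  fixes n p :: "real^2"
  assumes n: "n \<bullet> n = 1" and R: "0 \<le> R" and d: "0 < d"
    and \<alpha>: "0 \<le> \<alpha>" "\<alpha> < 1" and \<gamma>: "0 \<le> \<gamma>" and sm: "\<alpha> + \<gamma> = 2*\<beta>"
  shows "(\<integral>\<^sup>+x. ennreal (if dist x p < R \<and> 0 \<le> n \<bullet> (p - x) then Wt \<beta> p x / (d + n \<bullet> (p - x)) else 0) \<partial>lborel)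
     \<le> 2 * ennreal (R powr (1-\<alpha>)/(1-\<alpha>)) * Gt \<gamma> d R"
proof -
  define u where "u = psi2 (-(n$2), n$1)"
  define v where "v = -n"
  have uu: "u \<bullet> u = 1" using n by (simp add: u_def inner_real2 algebra_simps)
  have vv: "v \<bullet> v = 1" using n by (simp add: v_def)
  have uv: "u \<bullet> v = 0" by (simp add: u_def v_def inner_real2 algebra_simps)
  have uu': "(-u) \<bullet> (-u) = 1" "(-u) \<bullet> v = 0" using uu uv by simp_all
  define FQ where "FQ = (\<lambda>w x. ennreal (if 0 \<le> w \<bullet> (x-p) \<and> w \<bullet> (x-p) \<le> R \<and> 0 \<le> v \<bullet> (x-p) \<and> v \<bullet> (x-p) \<le> R
             then Wt \<beta> p x / (d + v \<bullet> (x-p)) else 0))"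
  have [measurable]: "FQ w \<in> borel_measurable borel" for w unfolding FQ_def by measurable
  have nu: "norm u = 1" using uu by (simp add: norm_eq_sqrt_inner)
  have nn: "norm n = 1" using n by (simp add: norm_eq_sqrt_inner)
  have pt: "ennreal (if dist x p < R \<and> 0 \<le> n \<bullet> (p - x) then Wt \<beta> p x / (d + n \<bullet> (p - x)) else 0)
        \<le> FQ u x + FQ (-u) x" for x
  proof (cases "dist x p < R \<and> 0 \<le> n \<bullet> (p - x)")
    case True
    have vx: "v \<bullet> (x - p) = n \<bullet> (p - x)" by (simp add: v_def inner_diff_right)
    have c1: "\<bar>u \<bullet> (x-p)\<bar> \<le> dist x p"
      using Cauchy_Schwarz_ineq2[of u "x-p"] nu by (simp add: dist_norm)
    have c2: "\<bar>n \<bullet> (p-x)\<bar> \<le> dist x p"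
      using Cauchy_Schwarz_ineq2[of n "p-x"] nn by (simp add: dist_norm norm_minus_commute)
    show ?thesis
    proof (cases "0 \<le> u \<bullet> (x-p)")
      case True2: True
      have "FQ u x = ennreal (Wt \<beta> p x / (d + n \<bullet> (p - x)))"
        unfolding FQ_def vx using True True2 c1 c2 by auto
      then show ?thesis using True by (simp add: add_increasing2)
    next
      case False
      have "FQ (-u) x = ennreal (Wt \<beta> p x / (d + n \<bullet> (p - x)))"
        unfolding FQ_def vx using True False c1 c2 by auto
      then show ?thesis using True by (simp add: add_increasing)
    qed
  qed auto
  have "(\<integral>\<^sup>+x. ennreal (if dist x p < R \<and> 0 \<le> n \<bullet> (p - x) then Wt \<beta> p x / (d + n \<bullet> (p - x)) else 0) \<partial>lborel)
      \<le> (\<integral>\<^sup>+x. FQ u x + FQ (-u) x \<partial>lborel)"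
    by (rule nn_integral_mono) (rule pt)
  also have "\<dots> = (\<integral>\<^sup>+x. FQ u x \<partial>lborel) + (\<integral>\<^sup>+x. FQ (-u) x \<partial>lborel)"
    by (rule nn_integral_add) auto
  also have "(\<integral>\<^sup>+x. FQ u x \<partial>lborel) \<le> ennreal (R powr (1-\<alpha>)/(1-\<alpha>)) * Gt \<gamma> d R"
    unfolding FQ_def Gt_def by (rule quarter[OF uu vv uv R d \<alpha> \<gamma> sm])
  also have "(\<integral>\<^sup>+x. FQ (-u) x \<partial>lborel) \<le> ennreal (R powr (1-\<alpha>)/(1-\<alpha>)) * Gt \<gamma> d R"
    unfolding FQ_def Gt_def by (rule quarter[OF uu'(1) vv uu'(2) R d \<alpha> \<gamma> sm])
  finally show ?thesis by (simp add: mult_2 distrib_right)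
qed

lemma ennreal_mult3: fixes a b :: real assumes "0 \<le> a" "0 \<le> b"
  shows "2 * ennreal a * ennreal b = ennreal (2*a*b)"
proof -
  have "ennreal (2*a*b) = ennreal (2*a) * ennreal b" using assms by (intro ennreal_mult) auto
  also have "ennreal (2*a) = ennreal 2 * ennreal a" using assms by (intro ennreal_mult) auto
  finally show ?thesis by simp
qed

lemma Rpow_le: fixes R e :: real assumes "0 < R" "0 \<le> e" "e \<le> 1" shows "R powr e \<le> max 1 R"
proof (cases "R \<le> 1")
  case True
  then have "ln R \<le> 0" using assms by simp
  then have "e * ln R \<le> 0" using assms by (intro mult_nonneg_nonpos) auto
  then have "R powr e \<le> 1" using assms by (simp add: powr_def)
  then show ?thesis by simp
next
  case False
  then have "R powr e \<le> R powr 1" using assms by (intro powr_mono) auto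
  then show ?thesis using assms by simp
qed

lemma dpow_le: fixes d e :: real assumes "0 < d" "0 \<le> e" "e \<le> 1 / (2 * (- ln d))" "d < 1"
  shows "d powr (-e) \<le> 2"
proof -
  have L: "0 < - ln d" using assms by simp
  have "d powr (-e) = exp (e * (- ln d))" using assms by (simp add: powr_def)
  also have "e * (- ln d) \<le> 1/2" using assms L by (simp add: field_simps)
  then have "exp (e * (- ln d)) \<le> exp (1/2)" by simp
  also have "\<dots> \<le> 2" by (rule exp_half_le2)
  finally show ?thesis .
qed

definition Bf :: "real \<Rightarrow> real \<Rightarrow> real" where
  "Bf \<beta> d = (if \<beta> < 1/2 then - ln d else if \<beta> = 1/2 then (ln d)^2 else - ln d * d powr (1 - 2*\<beta>))"

lemma core_lt:
  assumes b: "0 \<le> \<beta>" "\<beta> < 1/2" and R: "0 < R"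
  shows "\<exists>K\<ge>0. \<forall>d n p. 0 < d \<and> d < exp (-1) \<and> n \<bullet> n = 1 \<longrightarrow>
    (\<integral>\<^sup>+x. ennreal (if dist x p < R \<and> 0 \<le> n \<bullet> (p - x) then Wt \<beta> p x / (d + n \<bullet> (p - x)) else 0) \<partial>lborel)
      \<le> ennreal (K * Bf \<beta> d)"
proof -
  define A where "A = R powr (1 - 2*\<beta>) / (1 - 2*\<beta>)"
  have A0: "0 \<le> A" using b unfolding A_def by auto
  have l0: "0 \<le> ln (1+R)" using R by simp
  show ?thesis
  proof (intro exI[of _ "2 * A * (ln (1+R) + 1)"] conjI allI impI)
    show "0 \<le> 2 * A * (ln (1+R) + 1)" using A0 l0 by simp
    fix d :: real and n p :: "real^2"
    assume H: "0 < d \<and> d < exp (-1) \<and> n \<bullet> n = 1"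
    have d1: "d < 1" using H exp_less_one_iff[of "-1::real"] by linarith
    have L1: "1 < - ln d"
    proof -
      have "ln d < ln (exp (-1))" using H by (subst ln_less_cancel_iff) auto
      then show ?thesis by simp
    qed
    have "(\<integral>\<^sup>+x. ennreal (if dist x p < R \<and> 0 \<le> n \<bullet> (p - x) then Wt \<beta> p x / (d + n \<bullet> (p - x)) else 0) \<partial>lborel)
        \<le> 2 * ennreal A * Gt 0 d R"
      unfolding A_def using half[of n R d "2*\<beta>" 0 \<beta> p] H R b by simp
    also have "Gt 0 d R \<le> ennreal (ln (d + R) - ln d)"
    proof -
      have "Gt 0 d R \<le> (\<integral>\<^sup>+t. ennreal (if 0 \<le> t \<and> t \<le> R then 1 / (d + t) else 0) \<partial>lborel)"
        unfolding Gt_def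
      proof (rule nn_integral_mono)
        fix t :: real
        show "ennreal (if 0 \<le> t \<and> t \<le> R then t powr (-0)/(d+t) else 0)
            \<le> ennreal (if 0 \<le> t \<and> t \<le> R then 1 / (d + t) else 0)"
          using H by (auto intro!: ennreal_leI divide_right_mono simp: powr_zero_eq_one)
      qed
      also have "\<dots> = ennreal (ln (d + R) - ln d)" using H R by (intro int_T0) auto
      finally show ?thesis .
    qed
    also have "2 * ennreal A * ennreal (ln (d + R) - ln d) \<le> ennreal (2 * A * (ln (1+R) + 1) * Bf \<beta> d)"
    proof -
      have X0: "0 \<le> ln (d + R) - ln d" using H R by simp
      have "ln (d + R) \<le> ln (1 + R)" using H d1 R by (subst ln_le_cancel_iff) auto
      moreover have "ln (1+R) \<le> ln (1+R) * (- ln d)" using l0 L1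
        by (metis mult_le_cancel_left1 less_eq_real_def not_less)
      ultimately have X1: "ln (d + R) - ln d \<le> (ln (1+R) + 1) * Bf \<beta> d" using b by (simp add: Bf_def algebra_simps)
      have "2 * ennreal A * ennreal (ln (d + R) - ln d) = ennreal (2 * A * (ln (d + R) - ln d))"
        using A0 X0 by (simp add: ennreal_mult)
      also have "\<dots> \<le> ennreal (2 * A * ((ln (1+R) + 1) * Bf \<beta> d))"
        using A0 X1 by (intro ennreal_leI mult_left_mono) auto
      finally show ?thesis by (simp add: mult.assoc)
    qed
    finally show "(\<integral>\<^sup>+x. ennreal (if dist x p < R \<and> 0 \<le> n \<bullet> (p - x) then Wt \<beta> p x / (d + n \<bullet> (p - x)) else 0) \<partial>lborel)
      \<le> ennreal (2 * A * (ln (1+R) + 1) * Bf \<beta> d)" by (simp add: mult_left_mono)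
  qed
qed
lemma core_ge:
  assumes b: "1/2 \<le> \<beta>" "\<beta> < 1" and R: "0 < R"
  shows "\<exists>K\<ge>0. \<forall>d n p. 0 < d \<and> d < exp (-1) \<and> n \<bullet> n = 1 \<longrightarrow>
    (\<integral>\<^sup>+x. ennreal (if dist x p < R \<and> 0 \<le> n \<bullet> (p - x) then Wt \<beta> p x / (d + n \<bullet> (p - x)) else 0) \<partial>lborel)
      \<le> ennreal (K * Bf \<beta> d)"
proof -
  define S0 where "S0 = (if \<beta> = 1/2 then 6 else 1/(1-\<beta>) + 1/(2*\<beta>-1))"
  define K where "K = 2 * max 1 R * (2 + 1/(1-\<beta>)) * 2 * S0"
  have S00: "0 \<le> S0" using b by (simp add: S0_def)
  have K0: "0 \<le> K" unfolding K_def using b S00 by auto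
  show ?thesis
  proof (intro exI[of _ K] conjI allI impI)
    show "0 \<le> K" by (rule K0)
    fix d :: real and n p :: "real^2"
    assume H: "0 < d \<and> d < exp (-1) \<and> n \<bullet> n = 1"
    have d1: "d < 1" using H exp_less_one_iff[of "-1::real"] by linarith
    define L where "L = - ln d"
    have L1: "1 < L"
    proof -
      have "ln d < ln (exp (-1))" using H by (subst ln_less_cancel_iff) auto
      then show ?thesis by (simp add: L_def)
    qed
    define \<epsilon> where "\<epsilon> = min (1/(2*L)) (1-\<beta>)"
    have e0: "0 < \<epsilon>" using L1 b by (simp add: \<epsilon>_def)
    have e1: "\<epsilon> \<le> 1/(2*L)" "\<epsilon> \<le> 1-\<beta>" by (simp_all add: \<epsilon>_def)
    have e2: "\<epsilon> \<le> 1/2" using e1 b by linarith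
    define \<gamma> where "\<gamma> = 2*\<beta> - 1 + \<epsilon>"
    have g0: "0 < \<gamma>" "\<gamma> < 1" using e0 e1 b by (auto simp: \<gamma>_def)
    have step1: "(\<integral>\<^sup>+x. ennreal (if dist x p < R \<and> 0 \<le> n \<bullet> (p - x) then Wt \<beta> p x / (d + n \<bullet> (p - x)) else 0) \<partial>lborel)
        \<le> 2 * ennreal (R powr (1-(1-\<epsilon>))/(1-(1-\<epsilon>))) * Gt \<gamma> d R"
      using half[of n R d "1-\<epsilon>" \<gamma> \<beta> p] H R e0 e2 g0 by (simp add: \<gamma>_def)
    define D where "D = d powr (-\<gamma>) * (1/(1-\<gamma>) + 1/\<gamma>)"
    have D0: "0 \<le> D" using g0 by (simp add: D_def)
    have step2: "Gt \<gamma> d R \<le> ennreal D"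
      unfolding Gt_def D_def using int_Tg[of d \<gamma> R] H g0 by simp
    have RE0: "0 \<le> R powr \<epsilon> / \<epsilon>" using e0 by simp
    have step3: "2 * ennreal (R powr (1-(1-\<epsilon>))/(1-(1-\<epsilon>))) * Gt \<gamma> d R \<le> ennreal (2 * (R powr \<epsilon> / \<epsilon>) * D)"
    proof -
      have "2 * ennreal (R powr (1-(1-\<epsilon>))/(1-(1-\<epsilon>))) * Gt \<gamma> d R \<le> 2 * ennreal (R powr \<epsilon> / \<epsilon>) * ennreal D"
        using step2 by (simp add: mult_left_mono)
      also have "\<dots> = ennreal (2 * (R powr \<epsilon> / \<epsilon>) * D)" by (rule ennreal_mult3[OF RE0 D0])
      finally show ?thesis .
    qed
    have inv_e: "1/\<epsilon> \<le> L * (2 + 1/(1-\<beta>))"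
    proof (cases "1/(2*L) \<le> 1-\<beta>")
      case True
      then have "\<epsilon> = 1/(2*L)" by (simp add: \<epsilon>_def)
      then have "1/\<epsilon> = 2*L" by simp
      also have "\<dots> \<le> L * (2 + 1/(1-\<beta>))" using L1 b by (simp add: algebra_simps)
      finally show ?thesis .
    next
      case False
      then have "\<epsilon> = 1-\<beta>" by (simp add: \<epsilon>_def)
      then have "1/\<epsilon> = 1/(1-\<beta>)" by simp
      also have "\<dots> \<le> L * (1/(1-\<beta>))" using L1 b by (simp add: field_simps)
      also have "\<dots> \<le> L * (2 + 1/(1-\<beta>))" using L1 b by (intro mult_left_mono) auto
      finally show ?thesis .
    qed
    have RE: "R powr \<epsilon> / \<epsilon> \<le> max 1 R * (L * (2 + 1/(1-\<beta>)))"
    proof -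
      have "R powr \<epsilon> / \<epsilon> = R powr \<epsilon> * (1/\<epsilon>)" by simp
      also have "\<dots> \<le> max 1 R * (L * (2 + 1/(1-\<beta>)))"
        using Rpow_le[of R \<epsilon>] R e0 e2 inv_e by (intro mult_mono) auto
      finally show ?thesis .
    qed
    have dg: "d powr (-\<gamma>) \<le> 2 * d powr (1 - 2*\<beta>)"
    proof -
      have "d powr (-\<gamma>) = d powr (1 - 2*\<beta>) * d powr (-\<epsilon>)"
        unfolding \<gamma>_def by (simp add: powr_add[symmetric])
      also have "d powr (-\<epsilon>) \<le> 2" using dpow_le[of d \<epsilon>] H e0 e1 d1 by (simp add: L_def)
      then have "d powr (1 - 2*\<beta>) * d powr (-\<epsilon>) \<le> d powr (1 - 2*\<beta>) * 2" by (intro mult_left_mono) auto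
      finally show ?thesis by simp
    qed
    have Sg: "1/(1-\<gamma>) + 1/\<gamma> \<le> (if \<beta> = 1/2 then L else 1) * S0"
    proof -
      have a: "1/(1-\<gamma>) \<le> 1/(1-\<beta>)" using g0 e1 b by (intro divide_left_mono) (auto simp: \<gamma>_def)
      show ?thesis
      proof (cases "\<beta> = 1/2")
        case True
        have "1/\<gamma> = 1/\<epsilon>" using True by (simp add: \<gamma>_def)
        also have "\<dots> \<le> 4 * L" using inv_e True by simp
        finally have "1/\<gamma> \<le> 4 * L" .
        moreover have "1/(1-\<beta>) \<le> 2 * L"
        proof -
          have "1/(1-\<beta>) = 2" unfolding True by simp
          then show ?thesis using L1 by simp
        qed
        ultimately show ?thesis using a True by (simp add: S0_def)
      next
        case False
        then have "2*\<beta> - 1 > 0" using b by simp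
        then have "1/\<gamma> \<le> 1/(2*\<beta>-1)" using e0 by (intro divide_left_mono) (auto simp: \<gamma>_def)
        then show ?thesis using a False by (simp add: S0_def)
      qed
    qed
    have step4: "2 * (R powr \<epsilon> / \<epsilon>) * D \<le> K * Bf \<beta> d"
    proof -
      have "D \<le> (2 * d powr (1 - 2*\<beta>)) * ((if \<beta> = 1/2 then L else 1) * S0)"
        unfolding D_def using dg Sg g0 by (intro mult_mono) auto
      then have "2 * (R powr \<epsilon> / \<epsilon>) * D \<le> 2 * (max 1 R * (L * (2 + 1/(1-\<beta>)))) * ((2 * d powr (1 - 2*\<beta>)) * ((if \<beta> = 1/2 then L else 1) * S0))"
        using RE RE0 D0 by (intro mult_mono) auto
      also have "\<dots> = K * Bf \<beta> d"
      proof (cases "\<beta> = 1/2")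
        case True
        show ?thesis unfolding K_def S0_def Bf_def L_def True using H by (simp add: power2_eq_square)
      next
        case False
        then show ?thesis using b by (simp add: K_def Bf_def L_def)
      qed
      finally show ?thesis .
    qed
    show "(\<integral>\<^sup>+x. ennreal (if dist x p < R \<and> 0 \<le> n \<bullet> (p - x) then Wt \<beta> p x / (d + n \<bullet> (p - x)) else 0) \<partial>lborel)
      \<le> ennreal (K * Bf \<beta> d)"
      using step1 step3 step4 by (meson ennreal_leI order_trans)
  qed
qed


lemma core:
  assumes b: "0 \<le> \<beta>" "\<beta> < 1" and R: "0 < R"
  shows "\<exists>K\<ge>0. \<forall>d n p. 0 < d \<and> d < exp (-1) \<and> n \<bullet> n = 1 \<longrightarrow>
    (\<integral>\<^sup>+x. ennreal (if dist x p < R \<and> 0 \<le> n \<bullet> (p - x) then Wt \<beta> p x / (d + n \<bullet> (p - x)) else 0) \<partial>lborel)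
      \<le> ennreal (K * Bf \<beta> d)"
proof (cases "\<beta> < 1/2")
  case True
  then show ?thesis using core_lt[OF b(1) True R] by blast
next
  case False
  then show ?thesis using core_ge[OF _ b(2) R] by simp
qed

lemma Bf_ge:
  assumes "0 < d" "d < exp (-1)" "0 \<le> \<beta>" "\<beta> < 1"
  shows "1 \<le> - ln d" "- ln d \<le> Bf \<beta> d"
proof -
  have "ln d < ln (exp (-1))" using assms by (subst ln_less_cancel_iff) auto
  then show L1: "1 \<le> - ln d" by simp
  have d1: "d < 1" using assms exp_less_one_iff[of "-1::real"] by linarith
  show "- ln d \<le> Bf \<beta> d"
  proof (cases "\<beta> < 1/2")
    case True then show ?thesis by (simp add: Bf_def)
  next
    case False
    show ?thesis
    proof (cases "\<beta> = 1/2")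
      case True
      have "- ln d \<le> (- ln d) * (- ln d)" using L1 by (metis mult_le_cancel_left1 linorder_not_le order.trans zero_le_one)
      then show ?thesis using True by (simp add: Bf_def power2_eq_square)
    next
      case F2: False
      have "0 \<le> (1 - 2*\<beta>) * ln d" using False F2 assms d1
        by (intro mult_nonpos_nonpos) auto
      then have "1 \<le> d powr (1 - 2*\<beta>)" using assms by (simp add: powr_def)
      then have "- ln d * 1 \<le> - ln d * d powr (1 - 2*\<beta>)" using L1 by (intro mult_left_mono) auto
      then show ?thesis using False F2 by (simp add: Bf_def)
    qed
  qed
qed

lemma Wt_zero: "Wt 0 p x = 1"
  by (simp add: Wt_def)

lemma away:
  fixes n :: "real^2"
  assumes n: "n \<bullet> n = 1" and M: "0 < M"
  shows "\<exists>K\<ge>0. \<forall>d. 0 < d \<and> d < exp (-1) \<longrightarrow>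
    (\<integral>\<^sup>+x. ennreal (if norm x < M \<and> 0 \<le> c - n \<bullet> x then 1 / (d + (c - n \<bullet> x)) else 0) \<partial>lborel)
      \<le> ennreal (K * (- ln d))"
proof -
  define p where "p = c *\<^sub>R n"
  have np: "n \<bullet> p = c" using n by (simp add: p_def)
  have "0 < M + \<bar>c\<bar>" using M by simp
  from core[OF _ _ this, of 0] obtain K where K: "K \<ge> 0" and HK: "\<forall>d n p. 0 < d \<and> d < exp (-1) \<and> n \<bullet> n = 1 \<longrightarrow>
    (\<integral>\<^sup>+x. ennreal (if dist x p < M + \<bar>c\<bar> \<and> 0 \<le> n \<bullet> (p - x) then Wt 0 p x / (d + n \<bullet> (p - x)) else 0) \<partial>lborel)
      \<le> ennreal (K * Bf 0 d)"
    by auto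
  show ?thesis
  proof (intro exI[of _ K] conjI allI impI)
    show "0 \<le> K" by (rule K)
    fix d :: real assume d: "0 < d \<and> d < exp (-1)"
    have "(\<integral>\<^sup>+x. ennreal (if norm x < M \<and> 0 \<le> c - n \<bullet> x then 1 / (d + (c - n \<bullet> x)) else 0) \<partial>lborel)
        \<le> (\<integral>\<^sup>+x. ennreal (if dist x p < M + \<bar>c\<bar> \<and> 0 \<le> n \<bullet> (p - x) then Wt 0 p x / (d + n \<bullet> (p - x)) else 0) \<partial>lborel)"
    proof (rule nn_integral_mono)
      fix x :: "real^2"
      have e: "n \<bullet> (p - x) = c - n \<bullet> x" using np by (simp add: inner_diff_right)
      have "norm p = \<bar>c\<bar>" using n by (simp add: p_def norm_eq_sqrt_inner)
      then have "norm x < M \<Longrightarrow> dist x p < M + \<bar>c\<bar>"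
        using norm_triangle_ineq4[of x p] by (simp add: dist_norm)
      then show "ennreal (if norm x < M \<and> 0 \<le> c - n \<bullet> x then 1 / (d + (c - n \<bullet> x)) else 0)
          \<le> ennreal (if dist x p < M + \<bar>c\<bar> \<and> 0 \<le> n \<bullet> (p - x) then Wt 0 p x / (d + n \<bullet> (p - x)) else 0)"
        by (auto simp: e Wt_zero)
    qed
    also have "\<dots> \<le> ennreal (K * Bf 0 d)" using HK d n by simp
    finally show "(\<integral>\<^sup>+x. ennreal (if norm x < M \<and> 0 \<le> c - n \<bullet> x then 1 / (d + (c - n \<bullet> x)) else 0) \<partial>lborel)
      \<le> ennreal (K * (- ln d))" by (simp add: Bf_def)
  qed
qed


lemma Wt_nonneg: "0 \<le> Wt \<beta> p x"
  by (simp add: Wt_def)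

lemma nn_integral_lincomb:
  fixes X Y :: "real^2 \<Rightarrow> real"
  assumes [measurable]: "X \<in> borel_measurable borel" "Y \<in> borel_measurable borel"
    and nn: "\<And>x. 0 \<le> X x" "\<And>x. 0 \<le> Y x" and A: "0 \<le> A" and B: "0 \<le> B"
  shows "(\<integral>\<^sup>+x. ennreal (A * X x + B * Y x) \<partial>lborel)
       = ennreal A * (\<integral>\<^sup>+x. ennreal (X x) \<partial>lborel) + ennreal B * (\<integral>\<^sup>+x. ennreal (Y x) \<partial>lborel)"
proof -
  have "(\<integral>\<^sup>+x. ennreal (A * X x + B * Y x) \<partial>lborel) = (\<integral>\<^sup>+x. ennreal A * ennreal (X x) + ennreal B * ennreal (Y x) \<partial>lborel)"
    using nn A B by (intro nn_integral_cong) (simp add: ennreal_plus ennreal_mult)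
  also have "\<dots> = (\<integral>\<^sup>+x. ennreal A * ennreal (X x) \<partial>lborel) + (\<integral>\<^sup>+x. ennreal B * ennreal (Y x) \<partial>lborel)"
    by (rule nn_integral_add) auto
  also have "\<dots> = ennreal A * (\<integral>\<^sup>+x. ennreal (X x) \<partial>lborel) + ennreal B * (\<integral>\<^sup>+x. ennreal (Y x) \<partial>lborel)"
    by (simp add: nn_integral_cmult)
  finally show ?thesis .
qed

lemma ennreal_mul_add:
  fixes A X B Y :: real
  assumes "0 \<le> A" "0 \<le> X" "0 \<le> B" "0 \<le> Y"
  shows "ennreal A * ennreal X + ennreal B * ennreal Y = ennreal (A*X + B*Y)"
  using assms by (simp add: ennreal_mult ennreal_plus)

lemma ballw:
  assumes b: "0 \<le> \<beta>" "\<beta> < 1" and R: "0 < R"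
  shows "\<exists>C\<ge>0. \<forall>a. (\<integral>\<^sup>+x. ennreal (if dist x a < R then Wt \<beta> a x else 0) \<partial>lborel) \<le> ennreal C"
proof -
  from core[OF b R] obtain K where K: "K \<ge> 0" and HK: "\<forall>d n p. 0 < d \<and> d < exp (-1) \<and> n \<bullet> n = 1 \<longrightarrow>
    (\<integral>\<^sup>+x. ennreal (if dist x p < R \<and> 0 \<le> n \<bullet> (p - x) then Wt \<beta> p x / (d + n \<bullet> (p - x)) else 0) \<partial>lborel)
      \<le> ennreal (K * Bf \<beta> d)" by auto
  define d0 :: real where "d0 = exp (-2)"
  have d0: "0 < d0" "d0 < exp (-1)" by (auto simp: d0_def)
  have B0: "0 \<le> Bf \<beta> d0" using Bf_ge[OF d0 b] by linarith
  define n0 :: "real^2" where "n0 = axis 1 1"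
  have n0: "n0 \<bullet> n0 = 1" "(-n0) \<bullet> (-n0) = 1" by (simp_all add: n0_def)
  have nn0: "norm n0 = 1" using n0 by (simp add: norm_eq_sqrt_inner)
  define H where "H = (\<lambda>a n x. if dist x a < R \<and> 0 \<le> n \<bullet> (a - x) then Wt \<beta> a x / (d0 + n \<bullet> (a - x)) else 0)"
  have Hm[measurable]: "H a n \<in> borel_measurable borel" for a n unfolding H_def by measurable
  have H0: "0 \<le> H a n x" for a n x
    unfolding H_def using Wt_nonneg[of \<beta> a x] d0 by auto
  show ?thesis
  proof (intro exI[of _ "(d0 + R) * (K * Bf \<beta> d0) + (d0 + R) * (K * Bf \<beta> d0)"] conjI allI)
    show "0 \<le> (d0 + R) * (K * Bf \<beta> d0) + (d0 + R) * (K * Bf \<beta> d0)" using K B0 d0 R by simp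
    fix a :: "real^2"
    have "(\<integral>\<^sup>+x. ennreal (if dist x a < R then Wt \<beta> a x else 0) \<partial>lborel)
        \<le> (\<integral>\<^sup>+x. ennreal ((d0 + R) * H a n0 x + (d0 + R) * H a (-n0) x) \<partial>lborel)"
    proof (rule nn_integral_mono, rule ennreal_leI)
      fix x :: "real^2"
      show "(if dist x a < R then Wt \<beta> a x else 0) \<le> (d0 + R) * H a n0 x + (d0 + R) * H a (-n0) x"
      proof (cases "dist x a < R")
        case True
        have cs: "\<bar>n0 \<bullet> (a - x)\<bar> \<le> dist x a"
          using Cauchy_Schwarz_ineq2[of n0 "a-x"] nn0 by (simp add: dist_norm norm_minus_commute)
        have W0: "0 \<le> Wt \<beta> a x" by (rule Wt_nonneg)
        have key: "Wt \<beta> a x \<le> (d0 + R) * (Wt \<beta> a x / (d0 + s))" if "0 \<le> s" "s < R" for s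
        proof -
          have "Wt \<beta> a x = (d0 + s) * (Wt \<beta> a x / (d0 + s))" using d0 that by simp
          also have "\<dots> \<le> (d0 + R) * (Wt \<beta> a x / (d0 + s))"
            using that W0 d0 by (intro mult_right_mono) auto
          finally show ?thesis .
        qed
        show ?thesis
        proof (cases "0 \<le> n0 \<bullet> (a - x)")
          case c1: True
          have "Wt \<beta> a x \<le> (d0 + R) * H a n0 x"
            unfolding H_def using True c1 cs key[of "n0 \<bullet> (a - x)"] by simp
          moreover have "0 \<le> (d0 + R) * H a (-n0) x" using H0 d0 R by simp
          ultimately show ?thesis using True by simp
        next
          case c2: False
          have "Wt \<beta> a x \<le> (d0 + R) * H a (-n0) x"
            unfolding H_def using True c2 cs key[of "(-n0) \<bullet> (a - x)"] by simp
          moreover have "0 \<le> (d0 + R) * H a n0 x" using H0 d0 R by simp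
          ultimately show ?thesis using True by simp
        qed
      qed (use H0 d0 R in simp)
    qed
    also have "\<dots> = ennreal (d0 + R) * (\<integral>\<^sup>+x. ennreal (H a n0 x) \<partial>lborel) + ennreal (d0 + R) * (\<integral>\<^sup>+x. ennreal (H a (-n0) x) \<partial>lborel)"
      using d0 R by (intro nn_integral_lincomb H0) auto
    also have "\<dots> \<le> ennreal (d0 + R) * ennreal (K * Bf \<beta> d0) + ennreal (d0 + R) * ennreal (K * Bf \<beta> d0)"
    proof -
      have I1: "(\<integral>\<^sup>+x. ennreal (H a n0 x) \<partial>lborel) \<le> ennreal (K * Bf \<beta> d0)"
        unfolding H_def by (rule HK[rule_format, OF conjI[OF d0(1) conjI[OF d0(2) n0(1)]]])
      have I2: "(\<integral>\<^sup>+x. ennreal (H a (-n0) x) \<partial>lborel) \<le> ennreal (K * Bf \<beta> d0)"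
        unfolding H_def by (rule HK[rule_format, OF conjI[OF d0(1) conjI[OF d0(2) n0(2)]]])
      show ?thesis using I1 I2 by (intro add_mono mult_left_mono) auto
    qed
    also have "\<dots> = ennreal ((d0 + R) * (K * Bf \<beta> d0) + (d0 + R) * (K * Bf \<beta> d0))"
      using d0 R K B0 by (intro ennreal_mul_add) auto
    finally show "(\<integral>\<^sup>+x. ennreal (if dist x a < R then Wt \<beta> a x else 0) \<partial>lborel)
      \<le> ennreal ((d0 + R) * (K * Bf \<beta> d0) + (d0 + R) * (K * Bf \<beta> d0))" .
  qed
qed


lemma corner:
  fixes n a :: "real^2"
  assumes n: "n \<bullet> n = 1" and b: "0 \<le> \<beta>" "\<beta> < 1" and R: "0 < R" and q: "0 \<le> c - n \<bullet> a"
  shows "\<exists>K\<ge>0. \<forall>d. 0 < d \<and> d < exp (-1) \<longrightarrow>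
    (\<integral>\<^sup>+x. ennreal (if dist x a < R \<and> 0 \<le> c - n \<bullet> x then Wt \<beta> a x / (d + (c - n \<bullet> x)) else 0) \<partial>lborel)
      \<le> ennreal (K * Bf \<beta> d)"
proof (cases "c - n \<bullet> a = 0")
  case True
  from core[OF b R] obtain K where K: "K \<ge> 0" and HK: "\<forall>d n p. 0 < d \<and> d < exp (-1) \<and> n \<bullet> n = 1 \<longrightarrow>
    (\<integral>\<^sup>+x. ennreal (if dist x p < R \<and> 0 \<le> n \<bullet> (p - x) then Wt \<beta> p x / (d + n \<bullet> (p - x)) else 0) \<partial>lborel)
      \<le> ennreal (K * Bf \<beta> d)" by auto
  have e: "c - n \<bullet> x = n \<bullet> (a - x)" for x using True by (simp add: inner_diff_right)
  show ?thesis
    using K HK n unfolding e by blast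
next
  case False
  define q where "q = c - n \<bullet> a"
  have q0: "0 < q" using q False by (simp add: q_def)
  have nn: "norm n = 1" using n by (simp add: norm_eq_sqrt_inner)
  from ballw[OF b R] obtain C where C: "C \<ge> 0" and HC: "\<forall>a. (\<integral>\<^sup>+x. ennreal (if dist x a < R then Wt \<beta> a x else 0) \<partial>lborel) \<le> ennreal C"
    by auto
  have Rq: "0 < R + q" using R q0 by simp
  from core[OF _ _ Rq, of 0] obtain K0 where K0: "K0 \<ge> 0" and HK0: "\<forall>d n p. 0 < d \<and> d < exp (-1) \<and> n \<bullet> n = 1 \<longrightarrow>
    (\<integral>\<^sup>+x. ennreal (if dist x p < R + q \<and> 0 \<le> n \<bullet> (p - x) then Wt 0 p x / (d + n \<bullet> (p - x)) else 0) \<partial>lborel)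
      \<le> ennreal (K0 * Bf 0 d)" by auto
  define p where "p = a + q *\<^sub>R n"
  have np: "c - n \<bullet> x = n \<bullet> (p - x)" for x using n by (simp add: p_def q_def inner_diff_right inner_add_right)
  define A where "A = 2 / q"
  define B where "B = (q/2) powr (-2*\<beta>)"
  have A0: "0 \<le> A" and B0: "0 \<le> B" using q0 by (auto simp: A_def B_def)
  show ?thesis
  proof (intro exI[of _ "A * C + B * K0"] conjI allI impI)
    show "0 \<le> A * C + B * K0" using A0 B0 C K0 by simp
    fix d :: real assume d: "0 < d \<and> d < exp (-1)"
    have Bf1: "1 \<le> - ln d" "- ln d \<le> Bf \<beta> d" using Bf_ge[of d \<beta>] d b by auto
    define X where "X = (\<lambda>x. if dist x a < R then Wt \<beta> a x else 0)"
    define Y where "Y = (\<lambda>x. if dist x p < R + q \<and> 0 \<le> n \<bullet> (p - x) then Wt 0 p x / (d + n \<bullet> (p - x)) else 0)"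
    have [measurable]: "X \<in> borel_measurable borel" "Y \<in> borel_measurable borel"
      unfolding X_def Y_def by measurable
    have X0: "0 \<le> X x" for x unfolding X_def using Wt_nonneg[of \<beta> a x] by simp
    have Y0: "0 \<le> Y x" for x unfolding Y_def using d by (simp add: Wt_zero)
    have "(\<integral>\<^sup>+x. ennreal (if dist x a < R \<and> 0 \<le> c - n \<bullet> x then Wt \<beta> a x / (d + (c - n \<bullet> x)) else 0) \<partial>lborel)
        \<le> (\<integral>\<^sup>+x. ennreal (A * X x + B * Y x) \<partial>lborel)"
    proof (rule nn_integral_mono, rule ennreal_leI)
      fix x :: "real^2"
      show "(if dist x a < R \<and> 0 \<le> c - n \<bullet> x then Wt \<beta> a x / (d + (c - n \<bullet> x)) else 0) \<le> A * X x + B * Y x"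
      proof (cases "dist x a < R \<and> 0 \<le> c - n \<bullet> x")
        case True
        have cs: "\<bar>n \<bullet> (a - x)\<bar> \<le> dist x a"
          using Cauchy_Schwarz_ineq2[of n "a-x"] nn by (simp add: dist_norm norm_minus_commute)
        have lq: "c - n \<bullet> x = q + n \<bullet> (a - x)" by (simp add: q_def inner_diff_right)
        have W0: "0 \<le> Wt \<beta> a x" by (rule Wt_nonneg)
        show ?thesis
        proof (cases "dist x a < q/2")
          case c1: True
          have "q/2 \<le> c - n \<bullet> x" using lq cs c1 by linarith
          then have "Wt \<beta> a x / (d + (c - n \<bullet> x)) \<le> Wt \<beta> a x / (q/2)"
            using W0 q0 d by (intro divide_left_mono) auto
          also have "\<dots> = A * X x" using True by (simp add: A_def X_def)
          finally show ?thesis using True B0 Y0[of x] by (simp add: add_increasing2)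
        next
          case c2: False
          then have xa: "x \<noteq> a" using q0 by auto
          have "Wt \<beta> a x = dist x a powr (-2*\<beta>)" using xa by (simp add: Wt_def)
          also have "\<dots> \<le> (q/2) powr (-2*\<beta>)" using c2 q0 b by (intro powr_mono2') auto
          finally have wb: "Wt \<beta> a x \<le> B" by (simp add: B_def)
          have dp: "dist x p < R + q"
          proof -
            have "dist x p \<le> dist x a + dist a p" by (rule dist_triangle)
            also have "dist a p = q" using nn q0 by (simp add: p_def dist_norm)
            finally show ?thesis using True by simp
          qed
          have "Wt \<beta> a x / (d + (c - n \<bullet> x)) \<le> B / (d + (c - n \<bullet> x))"
            using wb True d by (intro divide_right_mono) auto
          also have "\<dots> = B * Y x" using True dp by (simp add: Y_def np Wt_zero)
          finally show ?thesis using True A0 X0[of x] by (simp add: add_increasing)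
        qed
      next
        case False
        then show ?thesis using A0 B0 X0[of x] Y0[of x] by auto
      qed
    qed
    also have "\<dots> = ennreal A * (\<integral>\<^sup>+x. ennreal (X x) \<partial>lborel) + ennreal B * (\<integral>\<^sup>+x. ennreal (Y x) \<partial>lborel)"
      by (rule nn_integral_lincomb) (use X0 Y0 A0 B0 in auto)
    also have "\<dots> \<le> ennreal A * ennreal C + ennreal B * ennreal (K0 * Bf 0 d)"
    proof -
      have I1: "(\<integral>\<^sup>+x. ennreal (X x) \<partial>lborel) \<le> ennreal C" unfolding X_def using HC by blast
      have I2: "(\<integral>\<^sup>+x. ennreal (Y x) \<partial>lborel) \<le> ennreal (K0 * Bf 0 d)"
        unfolding Y_def by (rule HK0[rule_format]) (use d n in auto)
      show ?thesis using I1 I2 by (intro add_mono mult_left_mono) auto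
    qed
    also have "\<dots> = ennreal (A * C + B * (K0 * Bf 0 d))"
    proof -
      have "0 \<le> K0 * Bf 0 d" using K0 Bf1(1) unfolding Bf_def by (intro mult_nonneg_nonneg) auto
      then show ?thesis using A0 B0 C by (intro ennreal_mul_add) auto
    qed
    also have "\<dots> \<le> ennreal ((A * C + B * K0) * Bf \<beta> d)"
    proof (rule ennreal_leI)
      have "A * C \<le> A * C * Bf \<beta> d" using A0 C Bf1
        by (metis mult_le_cancel_left1 mult_nonneg_nonneg order_trans not_le less_le_not_le)
      moreover have "B * (K0 * Bf 0 d) \<le> B * K0 * Bf \<beta> d"
      proof -
        have "Bf 0 d = - ln d" by (simp add: Bf_def)
        then have "B * (K0 * Bf 0 d) = (B * K0) * (- ln d)" by simp
        also have "\<dots> \<le> (B * K0) * Bf \<beta> d" using Bf1(2) B0 K0 by (intro mult_left_mono) auto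
        finally show ?thesis .
      qed
      ultimately show "A * C + B * (K0 * Bf 0 d) \<le> (A * C + B * K0) * Bf \<beta> d"
        by (simp add: distrib_right)
    qed
    finally show "(\<integral>\<^sup>+x. ennreal (if dist x a < R \<and> 0 \<le> c - n \<bullet> x then Wt \<beta> a x / (d + (c - n \<bullet> x)) else 0) \<partial>lborel)
      \<le> ennreal ((A * C + B * K0) * Bf \<beta> d)" .
  qed
qed

lemma geo:
  fixes V :: "(real^2) set"
  assumes fin: "finite V" and Om: "\<Omega> = interior (convex hull V)" and ne: "\<Omega> \<noteq> {}"
  shows "\<exists>(F :: (real^2) set set) N Cc. finite F \<and> (\<forall>h\<in>F. N h \<bullet> N h = 1)
     \<and> (\<forall>x \<in> convex hull V. \<forall>h\<in>F. 0 \<le> Cc h - N h \<bullet> x)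
     \<and> (\<forall>x\<in>\<Omega>. \<exists>h\<in>F. Cc h - N h \<bullet> x \<le> infdist x (frontier \<Omega>))"
proof -
  define P where "P = convex hull V"
  have "polyhedron P" unfolding P_def using fin by (simp add: polytope_convex_hull polytope_imp_polyhedron)
  then obtain F where F: "finite F" "P = \<Inter>F" and Fh: "\<forall>h\<in>F. \<exists>a b. a \<noteq> 0 \<and> h = {x. a \<bullet> x \<le> b}"
    unfolding polyhedron_def by blast
  obtain A where A: "\<forall>h\<in>F. \<exists>b. A h \<noteq> 0 \<and> h = {x. A h \<bullet> x \<le> b}"
    using bchoice[OF Fh] by blast
  obtain B where AB: "\<forall>h\<in>F. A h \<noteq> 0 \<and> h = {x. A h \<bullet> x \<le> B h}"
    using bchoice[OF A] by blast
  define N where "N h = (1 / norm (A h)) *\<^sub>R A h" for h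
  define Cc where "Cc h = B h / norm (A h)" for h
  have NN: "N h \<bullet> N h = 1" if "h \<in> F" for h
    using AB that by (simp add: N_def power2_norm_eq_inner[symmetric] field_simps)
  have hN: "h = {x. N h \<bullet> x \<le> Cc h}" if "h \<in> F" for h
  proof -
    have np: "0 < norm (A h)" using AB that by simp
    have "A h \<bullet> x \<le> B h \<longleftrightarrow> N h \<bullet> x \<le> Cc h" for x
      using np by (simp add: N_def Cc_def divide_le_cancel)
    then show ?thesis using AB that by blast
  qed
  have inP: "x \<in> P \<longleftrightarrow> (\<forall>h\<in>F. N h \<bullet> x \<le> Cc h)" for x
    using hN F(2) by auto
  have part3: "\<exists>h\<in>F. Cc h - N h \<bullet> x \<le> infdist x (frontier \<Omega>)" if x: "x \<in> \<Omega>" for x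
  proof (rule ccontr)
    assume "\<not> (\<exists>h\<in>F. Cc h - N h \<bullet> x \<le> infdist x (frontier \<Omega>))"
    then have lt: "\<forall>h\<in>F. infdist x (frontier \<Omega>) < Cc h - N h \<bullet> x" by auto
    have opn: "open \<Omega>" using Om by simp
    have bP: "bounded P" unfolding P_def using fin by (simp add: compact_imp_bounded compact_convex_hull finite_imp_compact)
    have OP: "\<Omega> \<subseteq> P" using Om by (simp add: P_def interior_subset)
    have "\<Omega> \<noteq> UNIV" using bP OP not_bounded_UNIV bounded_subset by blast
    then have fne: "frontier \<Omega> \<noteq> {}" using ne frontier_not_empty by blast
    obtain y where y: "y \<in> frontier \<Omega>" "infdist x (frontier \<Omega>) = dist x y"
      using infdist_attains_inf[OF frontier_closed fne] by blast
    define U where "U = (\<Inter>h\<in>F. {z. N h \<bullet> z < Cc h})"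
    have oU: "open U" unfolding U_def using F(1) by (intro open_INT) (auto intro: open_halfspace_lt)
    have UP: "U \<subseteq> P" unfolding U_def using inP by (auto intro: less_imp_le)
    have "U \<subseteq> \<Omega>" using interior_maximal[OF UP oU] Om by (simp add: P_def)
    moreover have "y \<in> U"
    proof -
      have "N h \<bullet> y < Cc h" if h: "h \<in> F" for h
      proof -
        have nn: "norm (N h) = 1" using NN[OF h] by (simp add: norm_eq_sqrt_inner)
        have "N h \<bullet> (y - x) \<le> dist x y"
          using Cauchy_Schwarz_ineq2[of "N h" "y - x"] nn by (simp add: dist_norm norm_minus_commute)
        moreover have "dist x y < Cc h - N h \<bullet> x" using lt h y(2) by simp
        ultimately show ?thesis by (simp add: inner_diff_right)
      qed
      then show ?thesis unfolding U_def by blast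
    qed
    ultimately have "y \<in> \<Omega>" by blast
    moreover have "y \<notin> \<Omega>" using y(1) opn by (simp add: frontier_def interior_open)
    ultimately show False by blast
  qed
  show ?thesis
  proof (intro exI[of _ F] exI[of _ N] exI[of _ Cc] conjI)
    show "finite F" by (rule F(1))
    show "\<forall>h\<in>F. N h \<bullet> N h = 1" using NN by blast
    show "\<forall>x\<in>convex hull V. \<forall>h\<in>F. 0 \<le> Cc h - N h \<bullet> x" using inP by (simp add: P_def)
    show "\<forall>x\<in>\<Omega>. \<exists>h\<in>F. Cc h - N h \<bullet> x \<le> infdist x (frontier \<Omega>)" using part3 by blast
  qed
qed

lemma inv_le_sum:
  fixes l :: "'b \<Rightarrow> real"
  assumes "finite F" "\<forall>h\<in>F. 0 \<le> l h" "\<exists>h\<in>F. l h \<le> \<rho>" "0 < d"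
  shows "1 / (d + \<rho>) \<le> (\<Sum>h\<in>F. 1 / (d + l h))"
proof -
  from assms(3) obtain h0 where h0: "h0 \<in> F" "l h0 \<le> \<rho>" by blast
  have "1 / (d + \<rho>) \<le> 1 / (d + l h0)" using h0 assms by (intro divide_left_mono) auto
  also have "\<dots> \<le> (\<Sum>h\<in>F. 1 / (d + l h))"
    using assms h0 by (intro member_le_sum) auto
  finally show ?thesis .
qed

lemma Bf_h_aux:
  fixes cI h :: real
  assumes cI: "cI > 1" and h: "h > 0" and hd: "cI * h^2 < exp (-1)"
  shows "h < 1" "0 < - ln (cI * h^2)" "- ln (cI * h^2) \<le> 2 * \<bar>ln h\<bar>" "\<bar>ln h\<bar> = - ln h"
proof -
  have "h^2 < 1"
  proof -
    have "1 * h^2 \<le> cI * h^2" using cI by (intro mult_right_mono) auto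
    then have "h^2 \<le> cI * h^2" by simp
    also have "\<dots> < exp (-1)" by (rule hd)
    also have "\<dots> < 1" by simp
    finally show ?thesis .
  qed
  then show h1: "h < 1" using h by (metis less_le_not_le one_le_power not_less power_one)
  have "cI * h^2 < 1" using hd exp_less_one_iff[of "-1::real"] by linarith
  then have "ln (cI * h^2) < 0" using cI h by simp
  then show "0 < - ln (cI * h^2)" by simp
  have lnh: "ln h < 0" using h h1 by simp
  then show ab: "\<bar>ln h\<bar> = - ln h" by simp
  have "ln (cI * h^2) = ln cI + 2 * ln h" using cI h by (simp add: ln_mult ln_realpow)
  moreover have "0 < ln cI" using cI by simp
  ultimately show "- ln (cI * h^2) \<le> 2 * \<bar>ln h\<bar>" using ab by simp
qed


lemma Bf_h:
  fixes cI h \<beta> :: real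
  assumes cI: "cI > 1" and h: "h > 0" and hd: "cI * h^2 < exp (-1)" and b: "0 \<le> \<beta>" "\<beta> < 1"
  shows "Bf \<beta> (cI * h^2) \<le> 4 * (\<bar>ln h\<bar> powr (1/2) *
           (if \<beta> \<noteq> 1/2 then h powr (min 0 (1 - 2 * \<beta>)) else \<bar>ln h\<bar> powr (1/2)))^2"
proof -
  note aux = Bf_h_aux[OF cI h hd]
  define Lh where "Lh = \<bar>ln h\<bar>"
  define L where "L = - ln (cI * h^2)"
  have L0: "0 < L" and LL: "L \<le> 2 * Lh" using aux by (simp_all add: L_def Lh_def)
  have Lh0: "0 < Lh" using L0 LL by simp
  have sq: "(Lh powr (1/2))^2 = Lh" using Lh0 by (simp add: powr_half_sqrt)
  have sq': "(\<bar>ln h\<bar> powr (1/2))^2 = Lh" using sq by (simp only: Lh_def)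
  show ?thesis
  proof (cases "\<beta> < 1/2")
    case True
    then have "min 0 (1 - 2*\<beta>) = 0" by simp
    then have "(\<bar>ln h\<bar> powr (1/2) * (if \<beta> \<noteq> 1/2 then h powr (min 0 (1 - 2 * \<beta>)) else \<bar>ln h\<bar> powr (1/2)))^2 = Lh"
      using True h sq by (simp add: Lh_def)
    moreover have "Bf \<beta> (cI * h^2) = L" using True by (simp add: Bf_def L_def)
    ultimately show ?thesis using LL Lh0 by simp
  next
    case False
    show ?thesis
    proof (cases "\<beta> = 1/2")
      case True
      have "(\<bar>ln h\<bar> powr (1/2) * (if \<beta> \<noteq> 1/2 then h powr (min 0 (1 - 2 * \<beta>)) else \<bar>ln h\<bar> powr (1/2)))^2 = Lh * Lh"
        using True sq by (simp add: Lh_def power_mult_distrib)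
      moreover have "Bf \<beta> (cI * h^2) = L * L" using True by (simp add: Bf_def L_def power2_eq_square)
      moreover have "L * L \<le> (2 * Lh) * (2 * Lh)" using L0 LL by (intro mult_mono) auto
      ultimately show ?thesis by simp
    next
      case F2: False
      have mn: "min 0 (1 - 2*\<beta>) = 1 - 2*\<beta>" using False by simp
      have hp: "(h powr (1 - 2*\<beta>))^2 = h powr (2 - 4*\<beta>)"
      proof -
        have "(h powr (1-2*\<beta>))^2 = h powr (of_nat 2 * (1-2*\<beta>))" using h by (intro powr_power) auto
        also have "(of_nat 2 * (1-2*\<beta>) :: real) = 2 - 4*\<beta>" by simp
        finally show ?thesis .
      qed
      have ite: "(if \<beta> \<noteq> 1/2 then h powr (min 0 (1 - 2 * \<beta>)) else \<bar>ln h\<bar> powr (1/2)) = h powr (1 - 2*\<beta>)"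
        using F2 mn by simp
      have "(\<bar>ln h\<bar> powr (1/2) * (if \<beta> \<noteq> 1/2 then h powr (min 0 (1 - 2 * \<beta>)) else \<bar>ln h\<bar> powr (1/2)))^2
          = Lh * h powr (2 - 4*\<beta>)"
        by (simp only: ite power_mult_distrib sq' hp)
      moreover have "Bf \<beta> (cI * h^2) = L * (cI * h^2) powr (1 - 2*\<beta>)" using False F2 by (simp add: Bf_def L_def)
      moreover have "(cI * h^2) powr (1 - 2*\<beta>) \<le> h powr (2 - 4*\<beta>)"
      proof -
        have "(cI * h^2) powr (1 - 2*\<beta>) = cI powr (1 - 2*\<beta>) * (h^2) powr (1 - 2*\<beta>)"
          using cI h by (simp add: powr_mult)
        also have "(h^2) powr (1 - 2*\<beta>) = h powr (2 - 4*\<beta>)"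
        proof -
          have "h powr 2 = h^2" using powr_realpow[of h 2] h by simp
          then have "(h^2) powr (1 - 2*\<beta>) = h powr (2 * (1 - 2*\<beta>))" by (metis powr_powr)
          also have "2 * (1 - 2*\<beta>) = 2 - 4*\<beta>" by simp
          finally show ?thesis .
        qed
        also have "cI powr (1 - 2*\<beta>) \<le> 1"
        proof -
          have "(1 - 2*\<beta>) * ln cI \<le> 0" using False F2 cI by (intro mult_nonpos_nonneg) auto
          then show ?thesis using cI by (simp add: powr_def)
        qed
        then have "cI powr (1 - 2*\<beta>) * h powr (2 - 4*\<beta>) \<le> 1 * h powr (2 - 4*\<beta>)"
          by (intro mult_right_mono) auto
        finally show ?thesis by simp
      qed
      then have "L * (cI * h^2) powr (1 - 2*\<beta>) \<le> (2 * Lh) * h powr (2 - 4*\<beta>)"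
        using L0 LL by (intro mult_mono) auto
      moreover have "2 * Lh * h powr (2 - 4*\<beta>) \<le> 4 * (Lh * h powr (2 - 4*\<beta>))"
        using Lh0 by simp
      ultimately show ?thesis by linarith
    qed
  qed
qed

lemma pw_main:
  fixes s r \<beta> :: real and a x :: "real^2"
  assumes s: "0 < s"
  shows "(s powr (-1/2) * dist x a powr (-\<beta>))^2 \<le> (1/s) * Wt \<beta> a x"
    and "(s powr (-1/2))^2 = 1/s"
proof -
  show sq: "(s powr (-1/2))^2 = 1/s"
  proof -
    have "(s powr (-1/2))^2 = s powr (of_nat 2 * (-1/2))" using s by (intro powr_power) auto
    also have "(of_nat 2 * (-1/2) :: real) = -1" by simp
    also have "s powr (-1) = 1 / s powr 1" by (rule powr_minus_divide)
    also have "s powr 1 = s" using s by simp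
    finally show ?thesis .
  qed
  have w: "(dist x a powr (-\<beta>))^2 \<le> Wt \<beta> a x"
  proof (cases "x = a")
    case True then show ?thesis by (simp add: Wt_def)
  next
    case False
    then have "0 < dist x a" by simp
    then have "(dist x a powr (-\<beta>))^2 = dist x a powr (of_nat 2 * (-\<beta>))" by (intro powr_power) auto
    also have "(of_nat 2 * (-\<beta>) :: real) = -2*\<beta>" by simp
    finally have "(dist x a powr (-\<beta>))^2 = dist x a powr (-2*\<beta>)" .
    then show ?thesis using False by (simp add: Wt_def)
  qed
  have "(s powr (-1/2) * dist x a powr (-\<beta>))^2 = (s powr (-1/2))^2 * (dist x a powr (-\<beta>))^2"
    by (simp add: power_mult_distrib)
  also have "\<dots> \<le> (1/s) * Wt \<beta> a x" unfolding sq using w s by (intro mult_left_mono) auto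
  finally show "(s powr (-1/2) * dist x a powr (-\<beta>))^2 \<le> (1/s) * Wt \<beta> a x" .
qed


theorem lemma3p3:
  fixes V :: "(real^2) set" and \<Omega> :: "(real^2) set" and C :: "(real^2) set"
    and cI R :: real and \<beta> :: "real^2 \<Rightarrow> real"
  assumes "finite V"
    and "\<Omega> = interior (convex hull V)"
    and "\<Omega> \<noteq> {}"
    and "C = {v. v extreme_point_of (convex hull V)}"
    and "cI > 1"
    and "R > 0"
    and "\<forall>a\<in>C. \<forall>b\<in>C. a \<noteq> b \<longrightarrow> (\<Omega> \<inter> ball a R) \<inter> (\<Omega> \<inter> ball b R) = {}"
    and "\<forall>a\<in>C. 0 \<le> \<beta> a \<and> \<beta> a < 1"
  shows "\<exists>c::real. \<forall>h::real. h > 0 \<and> cI * h\<^sup>2 < exp (-1) \<longrightarrow>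
           (\<forall>a\<in>C.
              L2_norm_sq (\<Omega> \<inter> ball a R)
                (\<lambda>x. sigma_w \<Omega> cI h x powr (-1/2) * dist x a powr (- \<beta> a))
              \<le> ennreal ((c * \<bar>ln h\<bar> powr (1/2) *
                   (if \<beta> a \<noteq> 1/2 then h powr (min 0 (1 - 2 * \<beta> a))
                    else \<bar>ln h\<bar> powr (1/2)))\<^sup>2))
         \<and> L2_norm_sq (\<Omega> - (\<Union>a\<in>C. \<Omega> \<inter> ball a (R/2)))
              (\<lambda>x. sigma_w \<Omega> cI h x powr (-1/2))
           \<le> ennreal ((c * \<bar>ln h\<bar> powr (1/2))\<^sup>2)"
proof -
  note fin = assms(1) and Om = assms(2) and ne = assms(3) and Cdef = assms(4)
    and cI = assms(5) and R = assms(6) and bet = assms(8)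
  from geo[OF fin Om ne] obtain F :: "(real^2) set set" and N Cc where G: "finite F \<and> (\<forall>h\<in>F. N h \<bullet> N h = 1)
     \<and> (\<forall>x \<in> convex hull V. \<forall>h\<in>F. 0 \<le> Cc h - N h \<bullet> x)
     \<and> (\<forall>x\<in>\<Omega>. \<exists>h\<in>F. Cc h - N h \<bullet> x \<le> infdist x (frontier \<Omega>))"
    by (elim exE) (erule that)
  have F: "finite F" and NN: "\<forall>h\<in>F. N h \<bullet> N h = 1"
    and pos: "\<forall>x \<in> convex hull V. \<forall>h\<in>F. 0 \<le> Cc h - N h \<bullet> x"
    and near: "\<forall>x\<in>\<Omega>. \<exists>h\<in>F. Cc h - N h \<bullet> x \<le> infdist x (frontier \<Omega>)"
    using G by simp_all
  have OP: "\<Omega> \<subseteq> convex hull V" using Om by (simp add: interior_subset)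
  have CV: "C \<subseteq> V" using Cdef extreme_point_of_convex_hull by blast
  have finC: "finite C" using CV fin finite_subset by blast
  have CP: "C \<subseteq> convex hull V" using CV hull_subset[of V convex] by blast
  have bV: "bounded (convex hull V)" using fin by (simp add: compact_imp_bounded compact_convex_hull finite_imp_compact)
  obtain M0 where M0: "M0 > 0" "\<forall>x\<in>convex hull V. norm x \<le> M0"
    using bounded_pos[THEN iffD1, OF bV] by blast
  define M where "M = M0 + 1"
  have M: "0 < M" "\<forall>x\<in>convex hull V. norm x < M" using M0 by (auto simp: M_def)
  have "\<forall>p. \<exists>K. fst p \<in> C \<and> snd p \<in> F \<longrightarrow> K \<ge> 0 \<and> (\<forall>d. 0 < d \<and> d < exp (-1) \<longrightarrow>
      (\<integral>\<^sup>+x. ennreal (if dist x (fst p) < R \<and> 0 \<le> Cc (snd p) - N (snd p) \<bullet> x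
          then Wt (\<beta> (fst p)) (fst p) x / (d + (Cc (snd p) - N (snd p) \<bullet> x)) else 0) \<partial>lborel)
      \<le> ennreal (K * Bf (\<beta> (fst p)) d))"
  proof
    fix p :: "(real^2) \<times> ((real^2) set)"
    show "\<exists>K. fst p \<in> C \<and> snd p \<in> F \<longrightarrow> K \<ge> 0 \<and> (\<forall>d. 0 < d \<and> d < exp (-1) \<longrightarrow>
      (\<integral>\<^sup>+x. ennreal (if dist x (fst p) < R \<and> 0 \<le> Cc (snd p) - N (snd p) \<bullet> x
          then Wt (\<beta> (fst p)) (fst p) x / (d + (Cc (snd p) - N (snd p) \<bullet> x)) else 0) \<partial>lborel)
      \<le> ennreal (K * Bf (\<beta> (fst p)) d))"
    proof (cases "fst p \<in> C \<and> snd p \<in> F")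
      case True
      have "\<exists>K\<ge>0. \<forall>d. 0 < d \<and> d < exp (-1) \<longrightarrow>
      (\<integral>\<^sup>+x. ennreal (if dist x (fst p) < R \<and> 0 \<le> Cc (snd p) - N (snd p) \<bullet> x
          then Wt (\<beta> (fst p)) (fst p) x / (d + (Cc (snd p) - N (snd p) \<bullet> x)) else 0) \<partial>lborel)
      \<le> ennreal (K * Bf (\<beta> (fst p)) d)"
        using True NN bet R pos CP by (intro corner) auto
      then show ?thesis by blast
    qed auto
  qed
  then obtain Kf where Kf: "\<forall>p. fst p \<in> C \<and> snd p \<in> F \<longrightarrow> Kf p \<ge> 0 \<and> (\<forall>d. 0 < d \<and> d < exp (-1) \<longrightarrow>
      (\<integral>\<^sup>+x. ennreal (if dist x (fst p) < R \<and> 0 \<le> Cc (snd p) - N (snd p) \<bullet> x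
          then Wt (\<beta> (fst p)) (fst p) x / (d + (Cc (snd p) - N (snd p) \<bullet> x)) else 0) \<partial>lborel)
      \<le> ennreal (Kf p * Bf (\<beta> (fst p)) d))"
    by (rule choice[THEN exE]) (erule that)
  have Kf0: "0 \<le> Kf (a, g)" if "a \<in> C" "g \<in> F" for a g
    using spec[OF Kf, of "(a, g)"] that by simp
  have "\<forall>h. \<exists>K. h \<in> F \<longrightarrow> K \<ge> 0 \<and> (\<forall>d. 0 < d \<and> d < exp (-1) \<longrightarrow>
      (\<integral>\<^sup>+x. ennreal (if norm x < M \<and> 0 \<le> Cc h - N h \<bullet> x then 1 / (d + (Cc h - N h \<bullet> x)) else 0) \<partial>lborel)
      \<le> ennreal (K * (- ln d)))"
  proof
    fix h :: "(real^2) set"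
    show "\<exists>K. h \<in> F \<longrightarrow> K \<ge> 0 \<and> (\<forall>d. 0 < d \<and> d < exp (-1) \<longrightarrow>
      (\<integral>\<^sup>+x. ennreal (if norm x < M \<and> 0 \<le> Cc h - N h \<bullet> x then 1 / (d + (Cc h - N h \<bullet> x)) else 0) \<partial>lborel)
      \<le> ennreal (K * (- ln d)))"
    proof (cases "h \<in> F")
      case True
      then show ?thesis using away[of "N h" M "Cc h"] NN M by auto
    qed auto
  qed
  then obtain Ka where Ka: "\<forall>h. h \<in> F \<longrightarrow> Ka h \<ge> 0 \<and> (\<forall>d. 0 < d \<and> d < exp (-1) \<longrightarrow>
      (\<integral>\<^sup>+x. ennreal (if norm x < M \<and> 0 \<le> Cc h - N h \<bullet> x then 1 / (d + (Cc h - N h \<bullet> x)) else 0) \<partial>lborel)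
      \<le> ennreal (Ka h * (- ln d)))"
    by (rule choice[THEN exE]) (erule that)
  have Ka0: "0 \<le> Ka g" if "g \<in> F" for g
    using spec[OF Ka, of g] that by simp
  define Kc where "Kc a = (\<Sum>h\<in>F. Kf (a, h))" for a
  define K2 where "K2 = (\<Sum>h\<in>F. Ka h)"
  define Kt where "Kt = (\<Sum>a\<in>C. Kc a) + K2"
  have Kc0: "0 \<le> Kc a" if "a \<in> C" for a unfolding Kc_def using Kf0 that by (intro sum_nonneg) auto
  have K20: "0 \<le> K2" unfolding K2_def using Ka0 by (intro sum_nonneg) auto
  have KcKt: "Kc a \<le> Kt" if "a \<in> C" for a
  proof -
    have "Kc a \<le> (\<Sum>a\<in>C. Kc a)" using finC that Kc0 by (intro member_le_sum) auto
    then show ?thesis using K20 by (simp add: Kt_def)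
  qed
  have Kt0: "0 \<le> Kt" using K20 Kc0 unfolding Kt_def by (simp add: sum_nonneg)
  have K2Kt: "K2 \<le> Kt" using Kc0 unfolding Kt_def by (simp add: sum_nonneg)
  define c where "c = sqrt (4 * Kt)"
  have c2: "c^2 = 4 * Kt" using Kt0 by (simp add: c_def)
  show ?thesis
  proof (intro exI[of _ c] allI impI conjI ballI)
    fix h :: real assume hh: "h > 0 \<and> cI * h\<^sup>2 < exp (-1)"
    define d where "d = cI * h^2"
    have d: "0 < d" "d < exp (-1)" using hh cI by (auto simp: d_def)
    have sig: "sigma_w \<Omega> cI h x = d + infdist x (frontier \<Omega>)" for x by (simp add: sigma_w_def d_def)
    have sig0: "0 < sigma_w \<Omega> cI h x" for x using d infdist_nonneg[of x "frontier \<Omega>"] by (simp add: sig)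
    have invs: "1 / sigma_w \<Omega> cI h x \<le> (\<Sum>g\<in>F. 1 / (d + (Cc g - N g \<bullet> x)))" if x: "x \<in> \<Omega>" for x
      unfolding sig
      using x OP pos near F d by (intro inv_le_sum) auto
    have Lh: "- ln d \<le> 2 * \<bar>ln h\<bar>" using Bf_h_aux[OF cI _ hh[THEN conjunct2]] hh by (simp add: d_def)
    fix a assume a: "a \<in> C"
    show "L2_norm_sq (\<Omega> \<inter> ball a R)
                (\<lambda>x. sigma_w \<Omega> cI h x powr (-1/2) * dist x a powr (- \<beta> a))
              \<le> ennreal ((c * \<bar>ln h\<bar> powr (1/2) *
                   (if \<beta> a \<noteq> 1/2 then h powr (min 0 (1 - 2 * \<beta> a))
                    else \<bar>ln h\<bar> powr (1/2)))\<^sup>2)"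
    proof -
      define Mf where "Mf g x = (if dist x a < R \<and> 0 \<le> Cc g - N g \<bullet> x
          then Wt (\<beta> a) a x / (d + (Cc g - N g \<bullet> x)) else 0)" for g x
      have Mf0: "0 \<le> Mf g x" for g x unfolding Mf_def using Wt_nonneg[of "\<beta> a" a x] d by auto
      have [measurable]: "(\<lambda>x. ennreal (Mf g x)) \<in> borel_measurable borel" for g unfolding Mf_def by measurable
      have pw: "ennreal ((sigma_w \<Omega> cI h x powr (-1/2) * dist x a powr (- \<beta> a))\<^sup>2) * indicator (\<Omega> \<inter> ball a R) x
          \<le> (\<Sum>g\<in>F. ennreal (Mf g x))" for x
      proof (cases "x \<in> \<Omega> \<inter> ball a R")
        case True
        have xP: "x \<in> convex hull V" using True OP by auto
        have "(sigma_w \<Omega> cI h x powr (-1/2) * dist x a powr (- \<beta> a))\<^sup>2 \<le> (1 / sigma_w \<Omega> cI h x) * Wt (\<beta> a) a x"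
          by (rule pw_main(1)[OF sig0])
        also have "\<dots> \<le> (\<Sum>g\<in>F. 1 / (d + (Cc g - N g \<bullet> x))) * Wt (\<beta> a) a x"
          using invs True Wt_nonneg by (intro mult_right_mono) auto
        also have "\<dots> = (\<Sum>g\<in>F. Mf g x)"
          unfolding sum_distrib_right
        proof (rule sum.cong)
          fix g assume g: "g \<in> F"
          have "dist x a < R" using True by (simp add: dist_commute)
          moreover have "0 \<le> Cc g - N g \<bullet> x" using pos xP g by blast
          ultimately show "1 / (d + (Cc g - N g \<bullet> x)) * Wt (\<beta> a) a x = Mf g x"
            by (simp add: Mf_def)
        qed simp
        finally have "(sigma_w \<Omega> cI h x powr (-1/2) * dist x a powr (- \<beta> a))\<^sup>2 \<le> (\<Sum>g\<in>F. Mf g x)" .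
        then have "ennreal ((sigma_w \<Omega> cI h x powr (-1/2) * dist x a powr (- \<beta> a))\<^sup>2) \<le> ennreal (\<Sum>g\<in>F. Mf g x)"
          by (rule ennreal_leI)
        also have "\<dots> = (\<Sum>g\<in>F. ennreal (Mf g x))" using Mf0 by (simp add: sum_ennreal)
        finally show ?thesis using True by simp
      qed simp
      have "L2_norm_sq (\<Omega> \<inter> ball a R) (\<lambda>x. sigma_w \<Omega> cI h x powr (-1/2) * dist x a powr (- \<beta> a))
          \<le> (\<integral>\<^sup>+x. (\<Sum>g\<in>F. ennreal (Mf g x)) \<partial>lborel)"
        unfolding L2_norm_sq_def by (rule nn_integral_mono) (rule pw)
      also have "\<dots> = (\<Sum>g\<in>F. (\<integral>\<^sup>+x. ennreal (Mf g x) \<partial>lborel))"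
        by (rule nn_integral_sum) measurable
      also have "\<dots> \<le> (\<Sum>g\<in>F. ennreal (Kf (a, g) * Bf (\<beta> a) d))"
      proof (rule sum_mono)
        fix g assume g: "g \<in> F"
        show "(\<integral>\<^sup>+x. ennreal (Mf g x) \<partial>lborel) \<le> ennreal (Kf (a, g) * Bf (\<beta> a) d)"
          using spec[OF Kf, of "(a, g)", unfolded fst_conv snd_conv] a g d unfolding Mf_def by simp
      qed
      also have "\<dots> = ennreal (Kc a * Bf (\<beta> a) d)"
      proof -
        have B0: "0 \<le> Bf (\<beta> a) d" using Bf_ge[OF d] bet a by force
        have "(\<Sum>g\<in>F. ennreal (Kf (a, g) * Bf (\<beta> a) d)) = ennreal (\<Sum>g\<in>F. Kf (a, g) * Bf (\<beta> a) d)"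
          using Kf0 a B0 by (intro sum_ennreal) auto
        then show ?thesis by (simp add: Kc_def sum_distrib_right)
      qed
      also have "\<dots> \<le> ennreal ((c * \<bar>ln h\<bar> powr (1/2) *
                   (if \<beta> a \<noteq> 1/2 then h powr (min 0 (1 - 2 * \<beta> a))
                    else \<bar>ln h\<bar> powr (1/2)))\<^sup>2)"
      proof (rule ennreal_leI)
        define Y where "Y = (\<bar>ln h\<bar> powr (1/2) * (if \<beta> a \<noteq> 1/2 then h powr (min 0 (1 - 2 * \<beta> a)) else \<bar>ln h\<bar> powr (1/2)))"
        have BY: "Bf (\<beta> a) d \<le> 4 * Y^2" unfolding Y_def d_def
          using Bf_h[OF cI _ _, of h "\<beta> a"] hh bet a by auto
        have "Kc a * Bf (\<beta> a) d \<le> Kt * (4 * Y^2)"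
        proof -
          have "0 \<le> Bf (\<beta> a) d" using Bf_ge[OF d] bet a by force
          then show ?thesis using BY KcKt[OF a] Kc0[OF a] Kt0 by (intro mult_mono) auto
        qed
        also have "\<dots> = (c * Y)^2" using c2 by (simp add: power_mult_distrib)
        finally show "Kc a * Bf (\<beta> a) d \<le> (c * \<bar>ln h\<bar> powr (1/2) *
                   (if \<beta> a \<noteq> 1/2 then h powr (min 0 (1 - 2 * \<beta> a))
                    else \<bar>ln h\<bar> powr (1/2)))\<^sup>2" by (simp add: Y_def mult.assoc)
      qed
      finally show ?thesis .
    qed
  next
    fix h :: real assume hh: "h > 0 \<and> cI * h\<^sup>2 < exp (-1)"
    define d where "d = cI * h^2"
    have d: "0 < d" "d < exp (-1)" using hh cI by (auto simp: d_def)
    have sig: "sigma_w \<Omega> cI h x = d + infdist x (frontier \<Omega>)" for x by (simp add: sigma_w_def d_def)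
    have sig0: "0 < sigma_w \<Omega> cI h x" for x using d infdist_nonneg[of x "frontier \<Omega>"] by (simp add: sig)
    have invs: "1 / sigma_w \<Omega> cI h x \<le> (\<Sum>g\<in>F. 1 / (d + (Cc g - N g \<bullet> x)))" if x: "x \<in> \<Omega>" for x
      unfolding sig
      using x OP pos near F d by (intro inv_le_sum) auto
    have Lh: "- ln d \<le> 2 * \<bar>ln h\<bar>" using Bf_h_aux[OF cI _ hh[THEN conjunct2]] hh by (simp add: d_def)
    define Mg where "Mg g x = (if norm x < M \<and> 0 \<le> Cc g - N g \<bullet> x then 1 / (d + (Cc g - N g \<bullet> x)) else 0)" for g x
    have Mg0: "0 \<le> Mg g x" for g x unfolding Mg_def using d by auto
    have [measurable]: "(\<lambda>x. ennreal (Mg g x)) \<in> borel_measurable borel" for g unfolding Mg_def by measurable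
    have pw: "ennreal ((sigma_w \<Omega> cI h x powr (-1/2))\<^sup>2) * indicator (\<Omega> - (\<Union>a\<in>C. \<Omega> \<inter> ball a (R/2))) x
          \<le> (\<Sum>g\<in>F. ennreal (Mg g x))" for x
    proof (cases "x \<in> \<Omega>")
      case True
      have xP: "x \<in> convex hull V" using True OP by auto
      have "(sigma_w \<Omega> cI h x powr (-1/2))\<^sup>2 = 1 / sigma_w \<Omega> cI h x"
        by (rule pw_main(2)[OF sig0])
      also have "\<dots> \<le> (\<Sum>g\<in>F. 1 / (d + (Cc g - N g \<bullet> x)))" using invs True by simp
      also have "\<dots> = (\<Sum>g\<in>F. Mg g x)"
      proof (rule sum.cong)
        fix g assume g: "g \<in> F"
        have "norm x < M" using M xP by blast
        moreover have "0 \<le> Cc g - N g \<bullet> x" using pos xP g by blast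
        ultimately show "1 / (d + (Cc g - N g \<bullet> x)) = Mg g x" by (simp add: Mg_def)
      qed simp
      finally have "ennreal ((sigma_w \<Omega> cI h x powr (-1/2))\<^sup>2) \<le> ennreal (\<Sum>g\<in>F. Mg g x)"
        by (rule ennreal_leI)
      also have "\<dots> = (\<Sum>g\<in>F. ennreal (Mg g x))" using Mg0 by (simp add: sum_ennreal)
      finally show ?thesis by (simp add: indicator_def)
    qed simp
    have "L2_norm_sq (\<Omega> - (\<Union>a\<in>C. \<Omega> \<inter> ball a (R/2))) (\<lambda>x. sigma_w \<Omega> cI h x powr (-1/2))
        \<le> (\<integral>\<^sup>+x. (\<Sum>g\<in>F. ennreal (Mg g x)) \<partial>lborel)"
      unfolding L2_norm_sq_def by (rule nn_integral_mono) (rule pw)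
    also have "\<dots> = (\<Sum>g\<in>F. (\<integral>\<^sup>+x. ennreal (Mg g x) \<partial>lborel))"
      by (rule nn_integral_sum) measurable
    also have "\<dots> \<le> (\<Sum>g\<in>F. ennreal (Ka g * (- ln d)))"
    proof (rule sum_mono)
      fix g assume g: "g \<in> F"
      show "(\<integral>\<^sup>+x. ennreal (Mg g x) \<partial>lborel) \<le> ennreal (Ka g * (- ln d))"
        using spec[OF Ka, of g] g d unfolding Mg_def by simp
    qed
    also have "\<dots> = ennreal (K2 * (- ln d))"
    proof -
      have L0: "0 \<le> - ln d" using Bf_ge(1)[OF d, of 0] by simp
      have "(\<Sum>g\<in>F. ennreal (Ka g * (- ln d))) = ennreal (\<Sum>g\<in>F. Ka g * (- ln d))"
        using Ka0 L0 by (intro sum_ennreal mult_nonneg_nonneg) auto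
      moreover have "(\<Sum>g\<in>F. Ka g * (- ln d)) = K2 * (- ln d)" unfolding K2_def by (rule sum_distrib_right[symmetric])
      ultimately show ?thesis by simp
    qed
    also have "\<dots> \<le> ennreal ((c * \<bar>ln h\<bar> powr (1/2))\<^sup>2)"
    proof (rule ennreal_leI)
      have lh0: "0 \<le> \<bar>ln h\<bar>" by simp
      have "K2 * (- ln d) \<le> Kt * (2 * \<bar>ln h\<bar>)"
        using K20 K2Kt Lh Kt0 Bf_ge(1)[OF d, of 0] by (intro mult_mono) auto
      also have "\<dots> \<le> (4 * Kt) * \<bar>ln h\<bar>" using Kt0 lh0 by (simp add: mult_right_mono)
      also have "\<dots> = (c * \<bar>ln h\<bar> powr (1/2))\<^sup>2"
        using c2 lh0 by (simp add: power_mult_distrib powr_half_sqrt)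
      finally show "K2 * (- ln d) \<le> (c * \<bar>ln h\<bar> powr (1/2))\<^sup>2" .
    qed
    finally show "L2_norm_sq (\<Omega> - (\<Union>a\<in>C. \<Omega> \<inter> ball a (R/2))) (\<lambda>x. sigma_w \<Omega> cI h x powr (-1/2))
        \<le> ennreal ((c * \<bar>ln h\<bar> powr (1/2))\<^sup>2)" .
  qed
qed

end
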